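(* Let $X$ be a real-valued random variable with a density and finite second moment. For $u\in\mathbb{R}$ let $X_u^+=(X\mid X>u)$ and $X_u^-=(X\mid X\le u)$ (whenever the conditioning events have positive probability). For a random variable $Z$ with independent copy $Z'$, let $\mathrm{SD}[Z]=\sqrt{\tfrac12\mathbb{E}[(Z-Z')^2]}$ and $\mathrm{GMD}[Z]=\mathbb{E}|Z-Z'|$. Let $u^*\in\mathbb{R}$. (i) If the density $f_{X_{u^*}^+}$ of $X_{u^*}^+$ is log-concave, then $\mathrm{SD}[X_u^+]\le\mathrm{GMD}[X_u^+]$ for all $u\ge u^*$. (ii) If the density $f_{X_{u^*}^-}$ of $X_{u^*}^-$ is log-concave, then $\mathrm{SD}[X_u^-]\le\mathrm{GMD}[X_u^-]$ for all $u\le u^*$.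
   Context: Log-concavity is understood on the support of the density. Truncation levels are such that the conditioning events have positive probability and the truncated variables are non-degenerate. *)

theory Defs
  imports "HOL-Probability.Probability"
begin

definition upper_trunc_density :: "'a measure \<Rightarrow> ('a \<Rightarrow> real) \<Rightarrow> (real \<Rightarrow> real) \<Rightarrow> real \<Rightarrow> real \<Rightarrow> real" where
  "upper_trunc_density M X f u x =
     indicator {u<..} x * f x / measure M {\<omega> \<in> space M. u < X \<omega>}"

definition lower_trunc_density :: "'a measure \<Rightarrow> ('a \<Rightarrow> real) \<Rightarrow> (real \<Rightarrow> real) \<Rightarrow> real \<Rightarrow> real \<Rightarrow> real" where
  "lower_trunc_density M X f u x =
     indicator {..u} x * f x / measure M {\<omega> \<in> space M. X \<omega> \<le> u}"

definition log_concave_density :: "(real \<Rightarrow> real) \<Rightarrow> bool" where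
  "log_concave_density g \<longleftrightarrow>
     (\<forall>x y t. 0 < g x \<longrightarrow> 0 < g y \<longrightarrow> 0 \<le> t \<longrightarrow> t \<le> 1 \<longrightarrow>
        0 < g (t * x + (1 - t) * y) \<and>
        t * ln (g x) + (1 - t) * ln (g y) \<le> ln (g (t * x + (1 - t) * y)))"

definition SD_dens :: "(real \<Rightarrow> real) \<Rightarrow> real" where
  "SD_dens g = sqrt (1/2 * (\<integral>x. (\<integral>y. (x - y)\<^sup>2 * g x * g y \<partial>lborel) \<partial>lborel))"

definition GMD_dens :: "(real \<Rightarrow> real) \<Rightarrow> real" where
  "GMD_dens g = (\<integral>x. (\<integral>y. \<bar>x - y\<bar> * g x * g y \<partial>lborel) \<partial>lborel)"

end

theory Submission
  imports Defs
begin


definition lc :: "(real \<Rightarrow> real) \<Rightarrow> bool" where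
  "lc \<phi> \<longleftrightarrow> (\<forall>x. 0 \<le> \<phi> x) \<and>
     (\<forall>x y l. 0 \<le> l \<longrightarrow> l \<le> 1 \<longrightarrow> \<phi> x powr l * \<phi> y powr (1-l) \<le> \<phi> (l*x+(1-l)*y))"

lemma lc_level_interval:
  assumes "lc a" "0 \<le> r"
  shows "is_interval {x. r < a x}"
  unfolding is_interval_1
proof (intro ballI allI impI)
  fix u v x assume u: "u \<in> {x. r < a x}" and v: "v \<in> {x. r < a x}" and x: "u \<le> x \<and> x \<le> v"
  show "x \<in> {x. r < a x}"
  proof (cases "u = v")
    case True then show ?thesis using u x by auto
  next
    case False
    then have uv: "u < v" using x by auto
    define l where "l = (v - x) / (v - u)"
    have l0: "0 \<le> l" "l \<le> 1" using x uv by (auto simp: l_def field_simps)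
    have lv: "l * (v - u) = v - x" using uv by (simp add: l_def)
    have xe: "x = l * u + (1 - l) * v" using lv by (simp add: algebra_simps)
    define m where "m = min (a u) (a v)"
    have m: "r < m" using u v by (auto simp: m_def)
    have a0: "\<forall>x. 0 \<le> a x" using assms(1) by (auto simp: lc_def)
    have "m = m powr l * m powr (1-l)" using m assms(2)
      by (simp add: powr_add[symmetric])
    also have "\<dots> \<le> a u powr l * a v powr (1-l)"
      using m assms(2) l0 a0
      by (intro mult_mono powr_mono2) (auto simp: m_def)
    also have "\<dots> \<le> a x" using assms(1) l0 unfolding lc_def xe by blast
    finally show ?thesis using m by simp
  qed
qed

lemma interval_measure_le:
  fixes I :: "real set"
  assumes I: "is_interval I"
    and E: "\<And>x1 x2. x1 \<in> I \<Longrightarrow> x2 \<in> I \<Longrightarrow> x1 \<le> x2 \<Longrightarrow> ennreal (x2 - x1) \<le> E"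
  shows "emeasure lborel I \<le> E"
proof (cases "I = {}")
  case True then show ?thesis by simp
next
  case ne: False
  then obtain x0 where x0: "x0 \<in> I" by auto
  show ?thesis
  proof (cases "E = \<infinity>")
    case True then show ?thesis by simp
  next
    case False
    then obtain e where e: "E = ennreal e" "0 \<le> e"
      by (metis ennreal_cases ennreal_enn2real_if enn2real_nonneg infinity_ennreal_def)
    have diff: "x2 - x1 \<le> e" if "x1 \<in> I" "x2 \<in> I" for x1 x2
    proof (cases "x1 \<le> x2")
      case True
      with E[OF that True] e show ?thesis by (auto simp: ennreal_le_iff2)
    next
      case False then show ?thesis using e by simp
    qed
    have ba: "bdd_above I"
      unfolding bdd_above_def using diff[OF x0] by (intro exI[of _ "x0 + e"]) (auto simp: algebra_simps)
    have bb: "bdd_below I"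
      unfolding bdd_below_def using diff[OF _ x0] by (intro exI[of _ "x0 - e"]) (fastforce simp: algebra_simps)
    have sub: "I \<subseteq> {Inf I..Sup I}"
      using ba bb by (auto intro: cInf_lower cSup_upper)
    have "Sup I - Inf I \<le> e"
    proof (rule field_le_epsilon)
      fix d :: real assume d: "0 < d"
      have "Sup I - d/2 < Sup I" using d by simp
      then obtain x2 where x2: "x2 \<in> I" "Sup I - d/2 < x2"
        using less_cSupE ne by blast
      have "Inf I < Inf I + d/2" using d by simp
      then obtain x1 where x1: "x1 \<in> I" "x1 < Inf I + d/2"
        using cInf_lessD ne by blast
      have "x2 - x1 \<le> e" using diff[OF x1(1) x2(1)] .
      then show "Sup I - Inf I \<le> e + d" using x1 x2 by linarith
    qed
    have "emeasure lborel I \<le> emeasure lborel {Inf I..Sup I}"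
      by (rule emeasure_mono[OF sub]) simp
    also have "\<dots> \<le> ennreal e"
      using \<open>Sup I - Inf I \<le> e\<close> by (simp add: emeasure_lborel_Icc_eq ennreal_le_iff2 e)
    finally show ?thesis using e by simp
  qed
qed



lemma seg_sub:
  fixes I J K :: "real set"
  assumes l: "0 \<le> l" "l \<le> 1" and I: "is_interval I" and J: "is_interval J"
    and sub: "\<And>x y. x\<in>I \<Longrightarrow> y\<in>J \<Longrightarrow> l*x+(1-l)*y \<in> K"
    and x: "x1 \<in> I" "x2 \<in> I" "x1 \<le> x2" and y: "y1 \<in> J" "y2 \<in> J" "y1 \<le> y2"
  shows "{l*x1+(1-l)*y1 .. l*x2+(1-l)*y2} \<subseteq> K"
proof
  fix z assume z: "z \<in> {l*x1+(1-l)*y1 .. l*x2+(1-l)*y2}"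
  define L1 where "L1 = l*x1+(1-l)*y1"
  define L2 where "L2 = l*x2+(1-l)*y2"
  have dL: "L2 - L1 = l*(x2-x1) + (1-l)*(y2-y1)" by (simp add: L1_def L2_def algebra_simps)
  show "z \<in> K"
  proof (cases "L1 = L2")
    case True
    then have "z = L1" using z by (auto simp: L1_def L2_def)
    then show ?thesis using sub x y by (simp add: L1_def)
  next
    case False
    have "L1 \<le> L2" using z by (simp add: L1_def L2_def)
    with False have lt: "L1 < L2" by simp
    define th where "th = (z - L1) / (L2 - L1)"
    have th: "0 \<le> th" "th \<le> 1" using z lt by (auto simp: th_def L1_def L2_def field_simps)
    define x where "x = x1 + th*(x2-x1)"
    define y where "y = y1 + th*(y2-y1)"
    have "th*(x2-x1) \<le> x2-x1" "0 \<le> th*(x2-x1)" using th x by (auto intro: mult_left_le_one_le)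
    then have "x1 \<le> x" "x \<le> x2" by (auto simp: x_def)
    then have xI: "x \<in> I"
      using I x unfolding is_interval_1 by blast
    have "th*(y2-y1) \<le> y2-y1" "0 \<le> th*(y2-y1)" using th y by (auto intro: mult_left_le_one_le)
    then have "y1 \<le> y" "y \<le> y2" by (auto simp: y_def)
    then have yJ: "y \<in> J"
      using J y unfolding is_interval_1 by blast
    have "th * (L2 - L1) = z - L1" using lt by (simp add: th_def)
    moreover have "l*x+(1-l)*y = L1 + th*(L2-L1)"
      by (simp add: x_def y_def L1_def L2_def algebra_simps)
    ultimately have "l*x+(1-l)*y = z" by simp
    then show ?thesis using sub[OF xI yJ] by simp
  qed
qed

lemma mink:
  fixes I J K :: "real set"
  assumes l: "0 < l" "l < 1" and I: "is_interval I" "I \<noteq> {}" and J: "is_interval J" "J \<noteq> {}"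
    and K: "K \<in> sets borel"
    and sub: "\<And>x y. x\<in>I \<Longrightarrow> y\<in>J \<Longrightarrow> l*x+(1-l)*y \<in> K"
  shows "ennreal l * emeasure lborel I + ennreal (1-l) * emeasure lborel J \<le> emeasure lborel K"
proof (cases "emeasure lborel K = \<infinity>")
  case True then show ?thesis by simp
next
  case False
  define k where "k = enn2real (emeasure lborel K)"
  have Kk: "emeasure lborel K = ennreal k" using False by (simp add: k_def ennreal_enn2real_if)
  have k0: "0 \<le> k" by (simp add: k_def)
  have box: "l*(x2-x1)+(1-l)*(y2-y1) \<le> k"
    if x: "x1 \<in> I" "x2 \<in> I" "x1 \<le> x2" and y: "y1 \<in> J" "y2 \<in> J" "y1 \<le> y2" for x1 x2 y1 y2
  proof -
    have "emeasure lborel {l*x1+(1-l)*y1 .. l*x2+(1-l)*y2} \<le> emeasure lborel K"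
      by (rule emeasure_mono[OF seg_sub[OF _ _ I(1) J(1) sub x y]]) (use l K in auto)
    moreover have "l*x1+(1-l)*y1 \<le> l*x2+(1-l)*y2"
      using l x y by (intro add_mono mult_left_mono) auto
    ultimately have "ennreal (l*x2+(1-l)*y2 - (l*x1+(1-l)*y1)) \<le> ennreal k"
      by (simp add: Kk)
    then show ?thesis using k0 by (simp add: ennreal_le_iff algebra_simps)
  qed
  obtain x0 where x0: "x0 \<in> I" using I by auto
  obtain y0 where y0: "y0 \<in> J" using J by auto
  have Ifin: "emeasure lborel I \<le> ennreal (k / l)"
  proof (rule interval_measure_le[OF I(1)])
    fix x1 x2 assume "x1 \<in> I" "x2 \<in> I" "x1 \<le> x2"
    with box[OF this y0 y0] l show "ennreal (x2 - x1) \<le> ennreal (k / l)"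
      by (intro ennreal_leI) (simp add: pos_le_divide_eq mult.commute)
  qed
  define i where "i = enn2real (emeasure lborel I)"
  have Ii: "emeasure lborel I = ennreal i"
  proof -
    have "emeasure lborel I < \<top>" using Ifin by (rule le_less_trans) simp
    then show ?thesis unfolding i_def by (simp add: ennreal_enn2real less_top)
  qed
  have i0: "0 \<le> i" by (simp add: i_def)
  have iy: "l * i + (1-l)*(y2-y1) \<le> k" if y: "y1 \<in> J" "y2 \<in> J" "y1 \<le> y2" for y1 y2
  proof -
    have "l*(x0-x0)+(1-l)*(y2-y1) \<le> k" using box[OF x0 x0 _ y] by simp
    then have r0: "0 \<le> (k - (1-l)*(y2-y1)) / l" using l by simp
    have "emeasure lborel I \<le> ennreal ((k - (1-l)*(y2-y1)) / l)"
    proof (rule interval_measure_le[OF I(1)])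
      fix x1 x2 assume "x1 \<in> I" "x2 \<in> I" "x1 \<le> x2"
      with box[OF this y] l show "ennreal (x2 - x1) \<le> ennreal ((k - (1-l)*(y2-y1)) / l)"
        by (intro ennreal_leI) (simp add: pos_le_divide_eq mult.commute)
    qed
    then have "i \<le> (k - (1-l)*(y2-y1)) / l" using r0 by (simp add: Ii ennreal_le_iff)
    then show ?thesis using l by (simp add: pos_le_divide_eq mult.commute)
  qed
  have Jfin: "emeasure lborel J \<le> ennreal ((k - l*i) / (1-l))"
  proof (rule interval_measure_le[OF J(1)])
    fix y1 y2 assume "y1 \<in> J" "y2 \<in> J" "y1 \<le> y2"
    with iy[OF this] l show "ennreal (y2 - y1) \<le> ennreal ((k - l*i) / (1-l))"
      by (intro ennreal_leI) (simp add: pos_le_divide_eq mult.commute)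
  qed
  define j where "j = enn2real (emeasure lborel J)"
  have Jj: "emeasure lborel J = ennreal j"
  proof -
    have "emeasure lborel J < \<top>" using Jfin by (rule le_less_trans) simp
    then show ?thesis unfolding j_def by (simp add: ennreal_enn2real less_top)
  qed
  have j0: "0 \<le> j" by (simp add: j_def)
  have "l * i + (1-l)*(y0-y0) \<le> k" using iy[OF y0 y0] by simp
  then have "0 \<le> (k - l*i) / (1-l)" using l by simp
  then have "j \<le> (k - l*i) / (1-l)" using Jfin by (simp add: Jj ennreal_le_iff)
  then have "l*i + (1-l)*j \<le> k" using l by (simp add: pos_le_divide_eq mult.commute)
  then have "ennreal (l*i + (1-l)*j) \<le> ennreal k" by (rule ennreal_leI)
  moreover have "ennreal (l*i + (1-l)*j) = ennreal l * ennreal i + ennreal (1-l) * ennreal j"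
    using l i0 j0 by (simp add: ennreal_plus ennreal_mult)
  ultimately show ?thesis by (simp add: Ii Jj Kk)
qed



lemma layer:
  assumes C: "0 < C" and c[measurable]: "c \<in> borel_measurable borel" and c0: "\<And>x. 0 \<le> c x"
  shows "ennreal C * (\<integral>\<^sup>+\<rho>. (\<integral>\<^sup>+x. indicator {0<..<1} \<rho> * indicator {x. C*\<rho> < c x} x \<partial>lborel) \<partial>lborel)
     = (\<integral>\<^sup>+x. ennreal (min (c x) C) \<partial>lborel)"
proof -
  have "(\<integral>\<^sup>+\<rho>. (\<integral>\<^sup>+x. indicator {0<..<1} \<rho> * indicator {x. C*\<rho> < c x} x \<partial>lborel) \<partial>lborel)
      = (\<integral>\<^sup>+x. (\<integral>\<^sup>+\<rho>. indicator {0<..<1} \<rho> * indicator {x. C*\<rho> < c x} x \<partial>lborel) \<partial>lborel)"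
    by (rule lborel_pair.Fubini') measurable
  also have "\<dots> = (\<integral>\<^sup>+x. ennreal (min 1 (c x / C)) \<partial>lborel)"
  proof (rule nn_integral_cong)
    fix x
    have "(\<lambda>\<rho>. indicator {0<..<1} \<rho> * indicator {x. C*\<rho> < c x} x :: ennreal)
        = indicator {0<..<min 1 (c x / C)}"
      using C by (auto simp: indicator_def fun_eq_iff field_simps)
    then show "(\<integral>\<^sup>+\<rho>. indicator {0<..<1} \<rho> * indicator {x. C*\<rho> < c x} x \<partial>lborel) = ennreal (min 1 (c x / C))"
      using C c0[of x] by simp
  qed
  finally have "ennreal C * (\<integral>\<^sup>+\<rho>. (\<integral>\<^sup>+x. indicator {0<..<1} \<rho> * indicator {x. C*\<rho> < c x} x \<partial>lborel) \<partial>lborel)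
     = ennreal C * (\<integral>\<^sup>+x. ennreal (min 1 (c x / C)) \<partial>lborel)" by simp
  also have "\<dots> = (\<integral>\<^sup>+x. ennreal C * ennreal (min 1 (c x / C)) \<partial>lborel)"
    by (rule nn_integral_cmult[symmetric]) measurable
  also have "\<dots> = (\<integral>\<^sup>+x. ennreal (min (c x) C) \<partial>lborel)"
  proof (rule nn_integral_cong)
    fix x
    have "C * min 1 (c x / C) = min (c x) C" using C by (simp add: min_def field_simps)
    then show "ennreal C * ennreal (min 1 (c x / C)) = ennreal (min (c x) C)"
      using C c0[of x] by (simp add: ennreal_mult[symmetric])
  qed
  finally show ?thesis .
qed



lemma lc_nonneg: "lc a \<Longrightarrow> 0 \<le> a x" by (simp add: lc_def)

lemma PL_bdd:
  assumes l: "0 < l" "l < 1" and la: "lc a" and lb: "lc b" and c0: "\<And>x. 0 \<le> c x"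
    and [measurable]: "a \<in> borel_measurable borel" "b \<in> borel_measurable borel" "c \<in> borel_measurable borel"
    and aM: "\<And>x. a x \<le> M" and bM: "\<And>x. b x \<le> M"
    and hyp: "\<And>x y. a x powr l * b y powr (1-l) \<le> c (l*x+(1-l)*y)"
    and fa: "(\<integral>\<^sup>+x. ennreal (a x) \<partial>lborel) < \<infinity>" and fb: "(\<integral>\<^sup>+x. ennreal (b x) \<partial>lborel) < \<infinity>"
  shows "ennreal (enn2real (\<integral>\<^sup>+x. ennreal (a x) \<partial>lborel) powr l * enn2real (\<integral>\<^sup>+x. ennreal (b x) \<partial>lborel) powr (1-l))
     \<le> (\<integral>\<^sup>+x. ennreal (c x) \<partial>lborel)"
proof -
  define \<alpha> where "\<alpha> = enn2real (\<integral>\<^sup>+x. ennreal (a x) \<partial>lborel)"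
  define \<beta> where "\<beta> = enn2real (\<integral>\<^sup>+x. ennreal (b x) \<partial>lborel)"
  have a0: "\<And>x. 0 \<le> a x" and b0: "\<And>x. 0 \<le> b x" using la lb by (auto simp: lc_nonneg)
  have \<alpha>e: "(\<integral>\<^sup>+x. ennreal (a x) \<partial>lborel) = ennreal \<alpha>" using fa by (simp add: \<alpha>_def ennreal_enn2real less_top)
  have \<beta>e: "(\<integral>\<^sup>+x. ennreal (b x) \<partial>lborel) = ennreal \<beta>" using fb by (simp add: \<beta>_def ennreal_enn2real less_top)
  have \<alpha>0: "0 \<le> \<alpha>" and \<beta>0: "0 \<le> \<beta>" by (auto simp: \<alpha>_def \<beta>_def)
  show ?thesis
  proof (cases "\<alpha> = 0 \<or> \<beta> = 0")
    case True
    then show ?thesis unfolding \<alpha>_def[symmetric] \<beta>_def[symmetric] by auto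
  next
    case False
    then have \<alpha>p: "0 < \<alpha>" and \<beta>p: "0 < \<beta>" using \<alpha>0 \<beta>0 by auto
    define A where "A = Sup (range a)"
    define B where "B = Sup (range b)"
    have bdA: "bdd_above (range a)" using aM by (auto intro!: bdd_aboveI)
    have bdB: "bdd_above (range b)" using bM by (auto intro!: bdd_aboveI)
    have aA: "\<And>x. a x \<le> A" unfolding A_def using bdA by (auto intro: cSup_upper)
    have bB: "\<And>x. b x \<le> B" unfolding B_def using bdB by (auto intro: cSup_upper)
    have Ap: "0 < A"
    proof (rule ccontr)
      assume "\<not> 0 < A"
      then have "\<And>x. a x = 0" using aA a0 by (meson antisym not_le order_trans)
      then have "\<alpha> = 0" by (simp add: \<alpha>_def)
      then show False using \<alpha>p by simp
    qed
    have Bp: "0 < B"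
    proof (rule ccontr)
      assume "\<not> 0 < B"
      then have "\<And>x. b x = 0" using bB b0 by (meson antisym not_le order_trans)
      then have "\<beta> = 0" by (simp add: \<beta>_def)
      then show False using \<beta>p by simp
    qed
    define C where "C = A powr l * B powr (1-l)"
    have Cp: "0 < C" using Ap Bp by (simp add: C_def)
    define La where "La = (\<lambda>\<rho>. (\<integral>\<^sup>+x. indicator {0<..<1} \<rho> * indicator {x. A*\<rho> < a x} x \<partial>lborel))"
    define Lb where "Lb = (\<lambda>\<rho>. (\<integral>\<^sup>+x. indicator {0<..<1} \<rho> * indicator {x. B*\<rho> < b x} x \<partial>lborel))"
    define Lc where "Lc = (\<lambda>\<rho>. (\<integral>\<^sup>+x. indicator {0<..<1} \<rho> * indicator {x. C*\<rho> < c x} x \<partial>lborel))"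
    have [measurable]: "La \<in> borel_measurable borel" "Lb \<in> borel_measurable borel" "Lc \<in> borel_measurable borel"
      unfolding La_def Lb_def Lc_def by measurable
    have layA: "ennreal A * (\<integral>\<^sup>+\<rho>. La \<rho> \<partial>lborel) = ennreal \<alpha>"
    proof -
      have "ennreal A * (\<integral>\<^sup>+\<rho>. La \<rho> \<partial>lborel) = (\<integral>\<^sup>+x. ennreal (min (a x) A) \<partial>lborel)"
        unfolding La_def by (rule layer[OF Ap _ a0]) simp
      also have "\<dots> = ennreal \<alpha>" using aA by (simp add: min_absorb1 \<alpha>e[symmetric])
      finally show ?thesis .
    qed
    have layB: "ennreal B * (\<integral>\<^sup>+\<rho>. Lb \<rho> \<partial>lborel) = ennreal \<beta>"
    proof -
      have "ennreal B * (\<integral>\<^sup>+\<rho>. Lb \<rho> \<partial>lborel) = (\<integral>\<^sup>+x. ennreal (min (b x) B) \<partial>lborel)"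
        unfolding Lb_def by (rule layer[OF Bp _ b0]) simp
      also have "\<dots> = ennreal \<beta>" using bB by (simp add: min_absorb1 \<beta>e[symmetric])
      finally show ?thesis .
    qed
    have layC: "ennreal C * (\<integral>\<^sup>+\<rho>. Lc \<rho> \<partial>lborel) \<le> (\<integral>\<^sup>+x. ennreal (c x) \<partial>lborel)"
    proof -
      have "ennreal C * (\<integral>\<^sup>+\<rho>. Lc \<rho> \<partial>lborel) = (\<integral>\<^sup>+x. ennreal (min (c x) C) \<partial>lborel)"
        unfolding Lc_def by (rule layer[OF Cp _ c0]) simp
      also have "\<dots> \<le> (\<integral>\<^sup>+x. ennreal (c x) \<partial>lborel)" by (intro nn_integral_mono ennreal_leI) simp
      finally show ?thesis .
    qed
    have pt: "ennreal l * La \<rho> + ennreal (1-l) * Lb \<rho> \<le> Lc \<rho>" for \<rho>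
    proof (cases "\<rho> \<in> {0<..<1}")
      case False
      then show ?thesis by (simp add: La_def Lb_def Lc_def)
    next
      case True
      have eA: "La \<rho> = emeasure lborel {x. A*\<rho> < a x}" using True by (simp add: La_def)
      have eB: "Lb \<rho> = emeasure lborel {x. B*\<rho> < b x}" using True by (simp add: Lb_def)
      have eC: "Lc \<rho> = emeasure lborel {x. C*\<rho> < c x}" using True by (simp add: Lc_def)
      have "A*\<rho> < A" using True Ap by simp
      then obtain xa where "A*\<rho> < a xa" unfolding A_def using less_cSupE[of "Sup (range a) * \<rho>" "range a"] by auto
      then have neA: "{x. A*\<rho> < a x} \<noteq> {}" by auto
      have "B*\<rho> < B" using True Bp by simp
      then obtain xb where "B*\<rho> < b xb" unfolding B_def using less_cSupE[of "Sup (range b) * \<rho>" "range b"] by auto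
      then have neB: "{x. B*\<rho> < b x} \<noteq> {}" by auto
      have "ennreal l * emeasure lborel {x. A*\<rho> < a x} + ennreal (1-l) * emeasure lborel {x. B*\<rho> < b x}
            \<le> emeasure lborel {x. C*\<rho> < c x}"
      proof (rule mink[OF l lc_level_interval[OF la] neA lc_level_interval[OF lb] neB])
        show "0 \<le> A*\<rho>" "0 \<le> B*\<rho>" using True Ap Bp by auto
        show "{x. C*\<rho> < c x} \<in> sets borel" by measurable
      next
        fix x y assume x: "x \<in> {x. A*\<rho> < a x}" and y: "y \<in> {x. B*\<rho> < b x}"
        have r0: "0 < A*\<rho>" "0 < B*\<rho>" using True Ap Bp by auto
        have "C*\<rho> = (A*\<rho>) powr l * (B*\<rho>) powr (1-l)"
          using r0 Ap Bp True
          by (simp add: C_def powr_mult powr_add[symmetric] algebra_simps)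
        also have "\<dots> < a x powr l * b y powr (1-l)"
          using x y r0 l by (intro mult_strict_mono powr_less_mono2) auto
        also have "\<dots> \<le> c (l*x+(1-l)*y)" by (rule hyp)
        finally show "l*x+(1-l)*y \<in> {x. C*\<rho> < c x}" by simp
      qed
      then show ?thesis by (simp add: eA eB eC)
    qed
    have "ennreal l * (\<integral>\<^sup>+\<rho>. La \<rho> \<partial>lborel) + ennreal (1-l) * (\<integral>\<^sup>+\<rho>. Lb \<rho> \<partial>lborel)
        = (\<integral>\<^sup>+\<rho>. ennreal l * La \<rho> + ennreal (1-l) * Lb \<rho> \<partial>lborel)"
      by (simp add: nn_integral_add nn_integral_cmult)
    also have "\<dots> \<le> (\<integral>\<^sup>+\<rho>. Lc \<rho> \<partial>lborel)" by (intro nn_integral_mono pt)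
    finally have main: "ennreal l * (\<integral>\<^sup>+\<rho>. La \<rho> \<partial>lborel) + ennreal (1-l) * (\<integral>\<^sup>+\<rho>. Lb \<rho> \<partial>lborel)
        \<le> (\<integral>\<^sup>+\<rho>. Lc \<rho> \<partial>lborel)" .
    have IA: "(\<integral>\<^sup>+\<rho>. La \<rho> \<partial>lborel) = ennreal (\<alpha>/A)"
    proof -
      have "(\<integral>\<^sup>+\<rho>. La \<rho> \<partial>lborel) = ennreal (1/A) * (ennreal A * (\<integral>\<^sup>+\<rho>. La \<rho> \<partial>lborel))"
        using Ap by (simp add: mult.assoc[symmetric] ennreal_mult[symmetric])
      also have "\<dots> = ennreal (\<alpha>/A)" using Ap \<alpha>0 by (simp add: layA ennreal_mult[symmetric])
      finally show ?thesis .
    qed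
    have IB: "(\<integral>\<^sup>+\<rho>. Lb \<rho> \<partial>lborel) = ennreal (\<beta>/B)"
    proof -
      have "(\<integral>\<^sup>+\<rho>. Lb \<rho> \<partial>lborel) = ennreal (1/B) * (ennreal B * (\<integral>\<^sup>+\<rho>. Lb \<rho> \<partial>lborel))"
        using Bp by (simp add: mult.assoc[symmetric] ennreal_mult[symmetric])
      also have "\<dots> = ennreal (\<beta>/B)" using Bp \<beta>0 by (simp add: layB ennreal_mult[symmetric])
      finally show ?thesis .
    qed
    have young: "(\<alpha>/A) powr l * (\<beta>/B) powr (1-l) \<le> l*(\<alpha>/A) + (1-l)*(\<beta>/B)"
      using l \<alpha>p \<beta>p Ap Bp by (intro Youngs_inequality_0) auto
    have "\<alpha> powr l * \<beta> powr (1-l) = C * ((\<alpha>/A) powr l * (\<beta>/B) powr (1-l))"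
      using Ap Bp \<alpha>p \<beta>p by (simp add: C_def powr_divide field_simps)
    also have "\<dots> \<le> C * (l*(\<alpha>/A) + (1-l)*(\<beta>/B))" using young Cp by simp
    finally have real: "\<alpha> powr l * \<beta> powr (1-l) \<le> C * (l*(\<alpha>/A) + (1-l)*(\<beta>/B))" .
    have "ennreal (\<alpha> powr l * \<beta> powr (1-l)) \<le> ennreal (C * (l*(\<alpha>/A) + (1-l)*(\<beta>/B)))"
      using real by (rule ennreal_leI)
    also have "\<dots> = ennreal C * (ennreal l * ennreal (\<alpha>/A) + ennreal (1-l) * ennreal (\<beta>/B))"
    proof -
      have e1: "ennreal l * ennreal (\<alpha>/A) = ennreal (l*(\<alpha>/A))" using l Ap \<alpha>0 by (intro ennreal_mult[symmetric]) auto
      have e2: "ennreal (1-l) * ennreal (\<beta>/B) = ennreal ((1-l)*(\<beta>/B))" using l Bp \<beta>0 by (intro ennreal_mult[symmetric]) auto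
      have e3: "ennreal (l*(\<alpha>/A)) + ennreal ((1-l)*(\<beta>/B)) = ennreal (l*(\<alpha>/A) + (1-l)*(\<beta>/B))"
        using l Ap Bp \<alpha>0 \<beta>0 by (intro ennreal_plus[symmetric]) auto
      have e4: "ennreal C * ennreal (l*(\<alpha>/A) + (1-l)*(\<beta>/B)) = ennreal (C * (l*(\<alpha>/A) + (1-l)*(\<beta>/B)))"
        using l Ap Bp \<alpha>0 \<beta>0 Cp by (intro ennreal_mult[symmetric]) auto
      show ?thesis by (simp only: e1 e2 e3 e4)
    qed
    also have "\<dots> \<le> ennreal C * (\<integral>\<^sup>+\<rho>. Lc \<rho> \<partial>lborel)"
      using main unfolding IA IB by (intro mult_left_mono) auto
    also have "\<dots> \<le> (\<integral>\<^sup>+x. ennreal (c x) \<partial>lborel)" by (rule layC)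
    finally show ?thesis unfolding \<alpha>_def \<beta>_def .
  qed
qed



lemma lc_min:
  assumes la: "lc a" and M: "0 \<le> M"
  shows "lc (\<lambda>x. min (a x) M)"
  unfolding lc_def
proof (intro conjI allI impI)
  fix x show "0 \<le> min (a x) M" using la M by (simp add: lc_nonneg)
next
  fix x y l :: real assume l: "0 \<le> l" "l \<le> 1"
  have a0: "\<And>x. 0 \<le> a x" using la by (simp add: lc_nonneg)
  have "min (a x) M powr l * min (a y) M powr (1-l) \<le> a x powr l * a y powr (1-l)"
    using l a0 M by (intro mult_mono powr_mono2) auto
  also have "\<dots> \<le> a (l*x+(1-l)*y)" using la l unfolding lc_def by blast
  finally have 1: "min (a x) M powr l * min (a y) M powr (1-l) \<le> a (l*x+(1-l)*y)" .
  have 2: "min (a x) M powr l * min (a y) M powr (1-l) \<le> M"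
  proof (cases "M = 0")
    case True then show ?thesis using a0 by simp
  next
    case False
    then have Mp: "0 < M" using M by simp
    have "min (a x) M powr l * min (a y) M powr (1-l) \<le> M powr l * M powr (1-l)"
      using l a0 M by (intro mult_mono powr_mono2) auto
    also have "\<dots> = M" using Mp by (simp add: powr_add[symmetric])
    finally show ?thesis .
  qed
  from 1 2 show "min (a x) M powr l * min (a y) M powr (1-l) \<le> min (a (l*x+(1-l)*y)) M" by simp
qed

lemma trunc_conv:
  assumes [measurable]: "a \<in> borel_measurable borel" and a0: "\<And>x. 0 \<le> a x"
    and fa: "(\<integral>\<^sup>+x. ennreal (a x) \<partial>lborel) < \<infinity>"
  shows "(\<lambda>n. enn2real (\<integral>\<^sup>+x. ennreal (min (a x) (real n)) \<partial>lborel))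
          \<longlonglongrightarrow> enn2real (\<integral>\<^sup>+x. ennreal (a x) \<partial>lborel)"
proof -
  have "(\<lambda>n. (\<integral>\<^sup>+x. ennreal (min (a x) (real n)) \<partial>lborel)) \<longlonglongrightarrow> (\<integral>\<^sup>+x. ennreal (a x) \<partial>lborel)"
  proof (rule nn_integral_LIMSEQ)
    show "incseq (\<lambda>n x. ennreal (min (a x) (real n)))"
      by (intro incseq_SucI le_funI ennreal_leI) auto
    show "\<And>n. (\<lambda>x. ennreal (min (a x) (real n))) \<in> borel_measurable lborel" by measurable
    fix x
    show "(\<lambda>n. ennreal (min (a x) (real n))) \<longlonglongrightarrow> ennreal (a x)"
    proof (rule tendsto_eventually)
      obtain N :: nat where "a x \<le> real N" using real_arch_simple by blast
      then show "\<forall>\<^sub>F n in sequentially. ennreal (min (a x) (real n)) = ennreal (a x)"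
        by (intro eventually_sequentiallyI[of N]) auto
    qed
  qed
  moreover have "(\<integral>\<^sup>+x. ennreal (a x) \<partial>lborel) = ennreal (enn2real (\<integral>\<^sup>+x. ennreal (a x) \<partial>lborel))"
    using fa by (simp add: ennreal_enn2real less_top)
  ultimately show ?thesis by (intro tendsto_enn2real) auto
qed

lemma PL:
  assumes l: "0 < l" "l < 1" and la: "lc a" and lb: "lc b" and c0: "\<And>x. 0 \<le> c x"
    and [measurable]: "a \<in> borel_measurable borel" "b \<in> borel_measurable borel" "c \<in> borel_measurable borel"
    and hyp: "\<And>x y. a x powr l * b y powr (1-l) \<le> c (l*x+(1-l)*y)"
    and fa: "(\<integral>\<^sup>+x. ennreal (a x) \<partial>lborel) < \<infinity>" and fb: "(\<integral>\<^sup>+x. ennreal (b x) \<partial>lborel) < \<infinity>"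
  shows "ennreal (enn2real (\<integral>\<^sup>+x. ennreal (a x) \<partial>lborel) powr l * enn2real (\<integral>\<^sup>+x. ennreal (b x) \<partial>lborel) powr (1-l))
     \<le> (\<integral>\<^sup>+x. ennreal (c x) \<partial>lborel)"
proof (cases "(\<integral>\<^sup>+x. ennreal (c x) \<partial>lborel) = \<infinity>")
  case True then show ?thesis by simp
next
  case False
  define \<gamma> where "\<gamma> = enn2real (\<integral>\<^sup>+x. ennreal (c x) \<partial>lborel)"
  have \<gamma>e: "(\<integral>\<^sup>+x. ennreal (c x) \<partial>lborel) = ennreal \<gamma>" using False by (simp add: \<gamma>_def ennreal_enn2real less_top)
  have a0: "\<And>x. 0 \<le> a x" and b0: "\<And>x. 0 \<le> b x" using la lb by (auto simp: lc_nonneg)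
  define an where "an = (\<lambda>n::nat. enn2real (\<integral>\<^sup>+x. ennreal (min (a x) (real n)) \<partial>lborel))"
  define bn where "bn = (\<lambda>n::nat. enn2real (\<integral>\<^sup>+x. ennreal (min (b x) (real n)) \<partial>lborel))"
  have bound: "an n powr l * bn n powr (1-l) \<le> \<gamma>" for n
  proof -
    have "ennreal (an n powr l * bn n powr (1-l)) \<le> (\<integral>\<^sup>+x. ennreal (min (c x) (real n)) \<partial>lborel)"
      unfolding an_def bn_def
    proof (rule PL_bdd[OF l lc_min[OF la of_nat_0_le_iff] lc_min[OF lb of_nat_0_le_iff]])
      show "\<And>x. 0 \<le> min (c x) (real n)" using c0 by simp
      show "(\<lambda>x. min (a x) (real n)) \<in> borel_measurable borel" "(\<lambda>x. min (b x) (real n)) \<in> borel_measurable borel"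
        "(\<lambda>x. min (c x) (real n)) \<in> borel_measurable borel" by measurable
      show "\<And>x. min (a x) (real n) \<le> real n" "\<And>x. min (b x) (real n) \<le> real n" by auto
      show "(\<integral>\<^sup>+x. ennreal (min (a x) (real n)) \<partial>lborel) < \<infinity>"
        using fa by (rule le_less_trans[rotated]) (intro nn_integral_mono ennreal_leI, simp)
      show "(\<integral>\<^sup>+x. ennreal (min (b x) (real n)) \<partial>lborel) < \<infinity>"
        using fb by (rule le_less_trans[rotated]) (intro nn_integral_mono ennreal_leI, simp)
      fix x y
      have "min (a x) (real n) powr l * min (b y) (real n) powr (1-l) \<le> a x powr l * b y powr (1-l)"
        using l a0 b0 by (intro mult_mono powr_mono2) auto
      also have "\<dots> \<le> c (l*x+(1-l)*y)" by (rule hyp)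
      finally have 1: "min (a x) (real n) powr l * min (b y) (real n) powr (1-l) \<le> c (l*x+(1-l)*y)" .
      have 2: "min (a x) (real n) powr l * min (b y) (real n) powr (1-l) \<le> real n"
      proof (cases "n = 0")
        case True then show ?thesis using a0 b0 by simp
      next
        case False
        have "min (a x) (real n) powr l * min (b y) (real n) powr (1-l) \<le> real n powr l * real n powr (1-l)"
          using l a0 b0 by (intro mult_mono powr_mono2) auto
        also have "\<dots> = real n" using False by (simp add: powr_add[symmetric])
        finally show ?thesis .
      qed
      from 1 2 show "min (a x) (real n) powr l * min (b y) (real n) powr (1-l) \<le> min (c (l*x+(1-l)*y)) (real n)"
        by simp
    qed
    also have "\<dots> \<le> ennreal \<gamma>" unfolding \<gamma>e[symmetric] by (intro nn_integral_mono ennreal_leI) simp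
    finally show ?thesis using False by (simp add: \<gamma>_def)
  qed
  have "(\<lambda>n. an n powr l * bn n powr (1-l)) \<longlonglongrightarrow>
      enn2real (\<integral>\<^sup>+x. ennreal (a x) \<partial>lborel) powr l * enn2real (\<integral>\<^sup>+x. ennreal (b x) \<partial>lborel) powr (1-l)"
    unfolding an_def bn_def
    using l by (intro tendsto_mult tendsto_powr' trunc_conv a0 b0 fa fb) (auto simp: a0 b0)
  then have "enn2real (\<integral>\<^sup>+x. ennreal (a x) \<partial>lborel) powr l * enn2real (\<integral>\<^sup>+x. ennreal (b x) \<partial>lborel) powr (1-l) \<le> \<gamma>"
    by (rule LIMSEQ_le_const2) (use bound in auto)
  then show ?thesis unfolding \<gamma>e by (rule ennreal_leI)
qed



lemma pred_atLeast_var[measurable (raw)]: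
  fixes f h :: "'a \<Rightarrow> real"
  assumes [measurable]: "f \<in> borel_measurable M" "h \<in> borel_measurable M"
  shows "Measurable.pred M (\<lambda>x. f x \<in> {h x..})"
  by simp

lemma pred_atMost_var[measurable (raw)]:
  fixes f h :: "'a \<Rightarrow> real"
  assumes [measurable]: "f \<in> borel_measurable M" "h \<in> borel_measurable M"
  shows "Measurable.pred M (\<lambda>x. f x \<in> {..h x})"
  by simp

lemma lc_interior:
  assumes nn: "\<And>x. 0 \<le> \<phi> x"
    and int: "\<And>x y l. 0 < l \<Longrightarrow> l < 1 \<Longrightarrow> \<phi> x powr l * \<phi> y powr (1-l) \<le> \<phi> (l*x+(1-l)*y)"
  shows "lc \<phi>"
  unfolding lc_def
proof (intro conjI allI impI)
  fix x show "0 \<le> \<phi> x" by (rule nn)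
next
  fix x y l :: real assume l: "0 \<le> l" "l \<le> 1"
  consider "l = 0" | "l = 1" | "0 < l \<and> l < 1" using l by linarith
  then show "\<phi> x powr l * \<phi> y powr (1-l) \<le> \<phi> (l*x+(1-l)*y)"
  proof cases
    case 1 then show ?thesis using nn[of y] by (simp add: powr_one)
  next
    case 2 then show ?thesis using nn[of x] by (simp add: powr_one)
  next
    case 3 then show ?thesis using int by auto
  qed
qed

lemma hyp_mult:
  fixes fa fb ga gb fc gc :: "real \<Rightarrow> real"
  assumes "\<And>x. 0 \<le> fa x" "\<And>x. 0 \<le> fb x" "\<And>x. 0 \<le> ga x" "\<And>x. 0 \<le> gb x"
    and "fa x powr l * fb y powr (1-l) \<le> fc z" and "ga x powr l * gb y powr (1-l) \<le> gc z"
  shows "(fa x * ga x) powr l * (fb y * gb y) powr (1-l) \<le> fc z * gc z"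
proof -
  have "(fa x * ga x) powr l * (fb y * gb y) powr (1-l)
      = (fa x powr l * fb y powr (1-l)) * (ga x powr l * gb y powr (1-l))"
    unfolding powr_mult by (simp add: mult_ac)
  also have "\<dots> \<le> fc z * gc z"
  proof -
    have "0 \<le> fa x powr l * fb y powr (1-l)" by simp
    then have "0 \<le> fc z" using assms(5) by linarith
    then show ?thesis using assms by (intro mult_mono) auto
  qed
  finally show ?thesis .
qed

lemma lc_mult:
  assumes "lc a" "lc b" shows "lc (\<lambda>x. a x * b x)"
  unfolding lc_def
proof (intro conjI allI impI)
  fix x show "0 \<le> a x * b x" using assms by (simp add: lc_nonneg)
next
  fix x y l :: real assume l: "0 \<le> l" "l \<le> 1"
  show "(a x * b x) powr l * (a y * b y) powr (1-l) \<le> a (l*x+(1-l)*y) * b (l*x+(1-l)*y)"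
    by (rule hyp_mult[where fa=a and fb=a and ga=b and gb=b and fc=a and gc=b]) 
       (use assms l in \<open>auto simp: lc_def\<close>)
qed

lemma lc_shift:
  assumes "lc a" shows "lc (\<lambda>x. a (x - t))"
  unfolding lc_def
proof (intro conjI allI impI)
  fix x show "0 \<le> a (x - t)" using assms by (simp add: lc_nonneg)
next
  fix x y l :: real assume l: "0 \<le> l" "l \<le> 1"
  have "a (x - t) powr l * a (y - t) powr (1-l) \<le> a (l*(x-t)+(1-l)*(y-t))"
    using assms l unfolding lc_def by blast
  also have "l*(x-t)+(1-l)*(y-t) = (l*x+(1-l)*y) - t" by (simp add: algebra_simps)
  finally show "a (x - t) powr l * a (y - t) powr (1-l) \<le> a (l*x+(1-l)*y - t)" .
qed

lemma ind_atMost_hyp: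
  assumes "0 \<le> l" "l \<le> 1"
  shows "(indicator {..w1} x :: real) powr l * indicator {..w2} y powr (1-l)
        \<le> indicator {..l*w1+(1-l)*w2} (l*x+(1-l)*y)"
proof (cases "x \<le> w1 \<and> y \<le> w2")
  case True
  then have "l*x+(1-l)*y \<le> l*w1+(1-l)*w2" using assms by (intro add_mono mult_left_mono) auto
  then show ?thesis using True by (simp add: indicator_def)
next
  case False then show ?thesis by (auto simp: indicator_def)
qed

lemma lc_ind_atMost: "lc (\<lambda>x. indicator {..w} x)"
  unfolding lc_def
proof (intro conjI allI impI)
  fix x show "0 \<le> (indicator {..w} x :: real)" by simp
next
  fix x y l :: real assume l: "0 \<le> l" "l \<le> 1"
  show "(indicator {..w} x :: real) powr l * indicator {..w} y powr (1-l) \<le> indicator {..w} (l*x+(1-l)*y)"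
    using ind_atMost_hyp[OF l, of w x w y] by (simp add: algebra_simps)
qed

lemma lc_nbu:
  assumes "lc \<phi>" "0 \<le> s" "0 \<le> t"
  shows "\<phi> (s+t) * \<phi> 0 \<le> \<phi> s * \<phi> t"
proof (cases "s + t = 0")
  case True
  then have "s = 0" "t = 0" using assms by auto
  then show ?thesis by simp
next
  case False
  then have st: "0 < s + t" using assms by simp
  define l where "l = t / (s+t)"
  have l: "0 \<le> l" "l \<le> 1" using assms st by (auto simp: l_def)
  have n: "\<And>x. 0 \<le> \<phi> x" using assms by (simp add: lc_nonneg)
  have es: "l*0 + (1-l)*(s+t) = s" using st by (simp add: l_def field_simps)
  have et: "(1-l)*0 + (1-(1-l))*(s+t) = t" using st by (simp add: l_def field_simps)
  have "\<phi> 0 powr l * \<phi> (s+t) powr (1-l) \<le> \<phi> (l*0 + (1-l)*(s+t))"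
    using assms(1) l unfolding lc_def by blast
  then have 1: "\<phi> 0 powr l * \<phi> (s+t) powr (1-l) \<le> \<phi> s" unfolding es .
  have lcD: "\<And>x y l. 0 \<le> l \<Longrightarrow> l \<le> 1 \<Longrightarrow> \<phi> x powr l * \<phi> y powr (1-l) \<le> \<phi> (l*x+(1-l)*y)"
    using assms(1) by (simp add: lc_def)
  have "\<phi> 0 powr (1-l) * \<phi> (s+t) powr (1-(1-l)) \<le> \<phi> ((1-l)*0 + (1-(1-l))*(s+t))"
    by (rule lcD) (use l in auto)
  then have 2: "\<phi> 0 powr (1-l) * \<phi> (s+t) powr (1-(1-l)) \<le> \<phi> t" unfolding et .
  have "\<phi> (s+t) * \<phi> 0 = (\<phi> 0 powr l * \<phi> (s+t) powr (1-l)) * (\<phi> 0 powr (1-l) * \<phi> (s+t) powr (1-(1-l)))"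
  proof -
    have "(\<phi> 0 powr l * \<phi> (s+t) powr (1-l)) * (\<phi> 0 powr (1-l) * \<phi> (s+t) powr (1-(1-l)))
        = (\<phi> 0 powr l * \<phi> 0 powr (1-l)) * (\<phi> (s+t) powr (1-l) * \<phi> (s+t) powr l)"
      by (simp add: algebra_simps)
    also have "\<dots> = \<phi> 0 powr 1 * \<phi> (s+t) powr 1" by (simp add: powr_add[symmetric])
    also have "\<dots> = \<phi> (s+t) * \<phi> 0" using n by (simp add: powr_one)
    finally show ?thesis by simp
  qed
  also have "\<dots> \<le> \<phi> s * \<phi> t" using 1 2 n by (intro mult_mono) auto
  finally show ?thesis .
qed

lemma integral_nn_real:
  fixes f :: "'a \<Rightarrow> real"
  assumes "f \<in> borel_measurable M" "\<And>x. 0 \<le> f x"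
  shows "integral\<^sup>L M f = enn2real (\<integral>\<^sup>+x. ennreal (f x) \<partial>M)"
  using assms by (intro integral_eq_nn_integral) auto

lemma tri_swap:
  fixes h :: "real \<Rightarrow> real \<Rightarrow> real \<Rightarrow> ennreal"
  assumes hm: "(\<lambda>p. h (fst p) (fst (snd p)) (snd (snd p))) \<in> borel_measurable (lborel \<Otimes>\<^sub>M (lborel \<Otimes>\<^sub>M lborel))"
  shows "(\<integral>\<^sup>+x. (\<integral>\<^sup>+y. (\<integral>\<^sup>+t. h x y t \<partial>lborel) \<partial>lborel) \<partial>lborel)
       = (\<integral>\<^sup>+t. (\<integral>\<^sup>+x. (\<integral>\<^sup>+y. h x y t \<partial>lborel) \<partial>lborel) \<partial>lborel)"
proof -
  have m1: "(\<lambda>q. h x (fst q) (snd q)) \<in> borel_measurable (lborel \<Otimes>\<^sub>M lborel)" for x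
    using measurable_compose[OF _ hm, of "\<lambda>q. (x, q)"] by simp
  have "(\<integral>\<^sup>+x. (\<integral>\<^sup>+y. (\<integral>\<^sup>+t. h x y t \<partial>lborel) \<partial>lborel) \<partial>lborel)
      = (\<integral>\<^sup>+x. (\<integral>\<^sup>+t. (\<integral>\<^sup>+y. h x y t \<partial>lborel) \<partial>lborel) \<partial>lborel)"
  proof (rule nn_integral_cong)
    fix x
    show "(\<integral>\<^sup>+y. (\<integral>\<^sup>+t. h x y t \<partial>lborel) \<partial>lborel) = (\<integral>\<^sup>+t. (\<integral>\<^sup>+y. h x y t \<partial>lborel) \<partial>lborel)"
      by (rule lborel_pair.Fubini'[symmetric]) (use m1[of x] in \<open>simp add: case_prod_beta'\<close>)
  qed
  also have "\<dots> = (\<integral>\<^sup>+t. (\<integral>\<^sup>+x. (\<integral>\<^sup>+y. h x y t \<partial>lborel) \<partial>lborel) \<partial>lborel)"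
  proof (rule lborel_pair.Fubini'[symmetric])
    have m2: "(\<lambda>q. h (fst (fst q)) (snd q) (snd (fst q))) \<in> borel_measurable ((lborel \<Otimes>\<^sub>M lborel) \<Otimes>\<^sub>M lborel)"
      using measurable_compose[OF _ hm, of "\<lambda>q. (fst (fst q), snd q, snd (fst q))"] by simp
    have "(\<lambda>p. \<integral>\<^sup>+y. h (fst p) y (snd p) \<partial>lborel) \<in> borel_measurable (lborel \<Otimes>\<^sub>M lborel)"
      by (rule lborel.borel_measurable_nn_integral) (use m2 in \<open>simp add: case_prod_beta'\<close>)
    then show "(\<lambda>(x, t). \<integral>\<^sup>+y. h x y t \<partial>lborel) \<in> borel_measurable (lborel \<Otimes>\<^sub>M lborel)"
      by (simp add: case_prod_beta')
  qed
  finally show ?thesis .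
qed



locale lcd =
  fixes g :: "real \<Rightarrow> real"
  assumes gm[measurable]: "g \<in> borel_measurable borel"
    and glc: "lc g"
    and g1: "(\<integral>\<^sup>+x. ennreal (g x) \<partial>lborel) = 1"
    and g2: "(\<integral>\<^sup>+x. ennreal (x\<^sup>2 * g x) \<partial>lborel) < \<infinity>"
begin

lemma g0: "0 \<le> g x" using glc by (simp add: lc_nonneg)

definition Gr :: "real \<Rightarrow> real" where
  "Gr w = enn2real (\<integral>\<^sup>+y. ennreal (g y * indicator {..w} y) \<partial>lborel)"

lemma Gr_int_le: "(\<integral>\<^sup>+y. ennreal (g y * indicator {..w} y) \<partial>lborel) \<le> 1"
proof -
  have "(\<integral>\<^sup>+y. ennreal (g y * indicator {..w} y) \<partial>lborel) \<le> (\<integral>\<^sup>+x. ennreal (g x) \<partial>lborel)"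
    by (intro nn_integral_mono ennreal_leI) (auto simp: indicator_def g0)
  then show ?thesis using g1 by simp
qed

lemma Gr_e: "ennreal (Gr w) = (\<integral>\<^sup>+y. ennreal (g y * indicator {..w} y) \<partial>lborel)"
proof -
  have "(\<integral>\<^sup>+y. ennreal (g y * indicator {..w} y) \<partial>lborel) < \<top>"
    using Gr_int_le[of w] by (rule le_less_trans) simp
  then show ?thesis unfolding Gr_def by (simp add: ennreal_enn2real less_top)
qed

lemma Gr_nn: "0 \<le> Gr w" by (simp add: Gr_def)

lemma Gr_le1: "Gr w \<le> 1"
proof -
  have "ennreal (Gr w) \<le> ennreal 1" using Gr_int_le[of w] by (simp add: Gr_e)
  then show ?thesis by (simp add: ennreal_le_iff)
qed

lemma Gr_mono: "mono Gr"
proof (rule monoI)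
  fix w w' :: real assume "w \<le> w'"
  then have "(\<integral>\<^sup>+y. ennreal (g y * indicator {..w} y) \<partial>lborel) \<le> (\<integral>\<^sup>+y. ennreal (g y * indicator {..w'} y) \<partial>lborel)"
    by (intro nn_integral_mono ennreal_leI) (auto simp: indicator_def g0)
  then have "ennreal (Gr w) \<le> ennreal (Gr w')" by (simp add: Gr_e)
  then show "Gr w \<le> Gr w'" using Gr_nn by (simp add: ennreal_le_iff)
qed

lemma Gr_meas[measurable]: "Gr \<in> borel_measurable borel"
  by (rule borel_measurable_mono[OF Gr_mono])

lemma lc_Gr: "lc Gr"
proof (rule lc_interior)
  show "\<And>x. 0 \<le> Gr x" by (rule Gr_nn)
  fix w1 w2 l :: real assume l: "0 < l" "l < 1"
  have "ennreal (enn2real (\<integral>\<^sup>+y. ennreal (g y * indicator {..w1} y) \<partial>lborel) powr l *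
                 enn2real (\<integral>\<^sup>+y. ennreal (g y * indicator {..w2} y) \<partial>lborel) powr (1-l))
        \<le> (\<integral>\<^sup>+y. ennreal (g y * indicator {..l*w1+(1-l)*w2} y) \<partial>lborel)"
  proof (rule PL[OF l lc_mult[OF glc lc_ind_atMost] lc_mult[OF glc lc_ind_atMost]])
    show "\<And>x. 0 \<le> g x * indicator {..l*w1+(1-l)*w2} x" by (simp add: g0)
    show "(\<lambda>x. g x * indicator {..w1} x) \<in> borel_measurable borel"
      "(\<lambda>x. g x * indicator {..w2} x) \<in> borel_measurable borel"
      "(\<lambda>x. g x * indicator {..l*w1+(1-l)*w2} x) \<in> borel_measurable borel" by measurable
    show "(\<integral>\<^sup>+y. ennreal (g y * indicator {..w1} y) \<partial>lborel) < \<infinity>"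
      using Gr_int_le[of w1] by (rule le_less_trans) simp
    show "(\<integral>\<^sup>+y. ennreal (g y * indicator {..w2} y) \<partial>lborel) < \<infinity>"
      using Gr_int_le[of w2] by (rule le_less_trans) simp
    fix x y
    show "(g x * indicator {..w1} x) powr l * (g y * indicator {..w2} y) powr (1-l)
        \<le> g (l*x+(1-l)*y) * indicator {..l*w1+(1-l)*w2} (l*x+(1-l)*y)"
      by (rule hyp_mult[where fa=g and fb=g and fc=g and ga="indicator {..w1}" and gb="indicator {..w2}"
            and gc="indicator {..l*w1+(1-l)*w2}"])
         (use glc l ind_atMost_hyp in \<open>auto simp: lc_def g0\<close>)
  qed
  then have "ennreal (Gr w1 powr l * Gr w2 powr (1-l)) \<le> ennreal (Gr (l*w1+(1-l)*w2))"
    unfolding Gr_def[symmetric] Gr_e .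
  then show "Gr w1 powr l * Gr w2 powr (1-l) \<le> Gr (l*w1+(1-l)*w2)"
    using Gr_nn by (simp add: ennreal_le_iff)
qed

end


context lcd begin

definition S :: "real \<Rightarrow> real" where
  "S t = enn2real (\<integral>\<^sup>+z. ennreal (g z * Gr (z - t)) \<partial>lborel)"

lemma S_int_le: "(\<integral>\<^sup>+z. ennreal (g z * Gr (z - t)) \<partial>lborel) \<le> 1"
proof -
  have "(\<integral>\<^sup>+z. ennreal (g z * Gr (z - t)) \<partial>lborel) \<le> (\<integral>\<^sup>+x. ennreal (g x) \<partial>lborel)"
    using Gr_le1 Gr_nn g0 by (intro nn_integral_mono ennreal_leI) (simp add: mult_left_le)
  then show ?thesis using g1 by simp
qed

lemma S_e: "ennreal (S t) = (\<integral>\<^sup>+z. ennreal (g z * Gr (z - t)) \<partial>lborel)"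
proof -
  have "(\<integral>\<^sup>+z. ennreal (g z * Gr (z - t)) \<partial>lborel) < \<top>"
    using S_int_le[of t] by (rule le_less_trans) simp
  then show ?thesis unfolding S_def by (simp add: ennreal_enn2real less_top)
qed

lemma S_nn: "0 \<le> S t" by (simp add: S_def)

lemma lc_S: "lc S"
proof (rule lc_interior)
  show "\<And>x. 0 \<le> S x" by (rule S_nn)
  fix t1 t2 l :: real assume l: "0 < l" "l < 1"
  have lcG: "\<And>t. lc (\<lambda>z. Gr (z - t))" by (rule lc_shift[OF lc_Gr])
  have "ennreal (enn2real (\<integral>\<^sup>+z. ennreal (g z * Gr (z - t1)) \<partial>lborel) powr l *
                 enn2real (\<integral>\<^sup>+z. ennreal (g z * Gr (z - t2)) \<partial>lborel) powr (1-l))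
        \<le> (\<integral>\<^sup>+z. ennreal (g z * Gr (z - (l*t1+(1-l)*t2))) \<partial>lborel)"
  proof (rule PL[OF l lc_mult[OF glc lcG] lc_mult[OF glc lcG]])
    show "\<And>x. 0 \<le> g x * Gr (x - (l*t1+(1-l)*t2))" by (simp add: g0 Gr_nn)
    show "(\<lambda>x. g x * Gr (x - t1)) \<in> borel_measurable borel"
      "(\<lambda>x. g x * Gr (x - t2)) \<in> borel_measurable borel"
      "(\<lambda>x. g x * Gr (x - (l*t1+(1-l)*t2))) \<in> borel_measurable borel" by measurable
    show "(\<integral>\<^sup>+z. ennreal (g z * Gr (z - t1)) \<partial>lborel) < \<infinity>"
      using S_int_le[of t1] by (rule le_less_trans) simp
    show "(\<integral>\<^sup>+z. ennreal (g z * Gr (z - t2)) \<partial>lborel) < \<infinity>"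
      using S_int_le[of t2] by (rule le_less_trans) simp
    fix x y
    have e: "l*x+(1-l)*y - (l*t1+(1-l)*t2) = l*(x-t1)+(1-l)*(y-t2)" by (simp add: algebra_simps)
    have G: "Gr (x - t1) powr l * Gr (y - t2) powr (1-l) \<le> Gr (l*x+(1-l)*y - (l*t1+(1-l)*t2))"
      unfolding e using lc_Gr l unfolding lc_def by auto
    show "(g x * Gr (x - t1)) powr l * (g y * Gr (y - t2)) powr (1-l)
        \<le> g (l*x+(1-l)*y) * Gr (l*x+(1-l)*y - (l*t1+(1-l)*t2))"
      by (rule hyp_mult[where fa=g and fb=g and fc=g and ga="\<lambda>z. Gr (z - t1)" and gb="\<lambda>z. Gr (z - t2)"
            and gc="\<lambda>z. Gr (z - (l*t1+(1-l)*t2))"])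
         (use glc l G in \<open>auto simp: lc_def g0 Gr_nn\<close>)
  qed
  then have "ennreal (S t1 powr l * S t2 powr (1-l)) \<le> ennreal (S (l*t1+(1-l)*t2))"
    unfolding S_def[symmetric] S_e .
  then show "S t1 powr l * S t2 powr (1-l) \<le> S (l*t1+(1-l)*t2)"
    using S_nn by (simp add: ennreal_le_iff)
qed

definition Pe :: "real \<Rightarrow> ennreal" where
  "Pe t = (\<integral>\<^sup>+x. (\<integral>\<^sup>+y. ennreal (g x * g y) * indicator {t..} (x - y) \<partial>lborel) \<partial>lborel)"

lemma Pe_meas[measurable]: "Pe \<in> borel_measurable borel"
  unfolding Pe_def by measurable

lemma Pe_S: "Pe t = ennreal (S t)"
proof -
  have "ennreal (S t) = (\<integral>\<^sup>+z. ennreal (g z) * ennreal (Gr (z - t)) \<partial>lborel)"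
    unfolding S_e by (intro nn_integral_cong) (simp add: ennreal_mult g0 Gr_nn)
  also have "\<dots> = (\<integral>\<^sup>+z. ennreal (g z) * (\<integral>\<^sup>+y. ennreal (g y * indicator {..z-t} y) \<partial>lborel) \<partial>lborel)"
    by (simp add: Gr_e)
  also have "\<dots> = (\<integral>\<^sup>+z. (\<integral>\<^sup>+y. ennreal (g z) * ennreal (g y * indicator {..z-t} y) \<partial>lborel) \<partial>lborel)"
    by (intro nn_integral_cong nn_integral_cmult[symmetric]) measurable
  also have "\<dots> = Pe t"
    unfolding Pe_def
  proof (intro nn_integral_cong)
    fix z y
    show "ennreal (g z) * ennreal (g y * indicator {..z-t} y) = ennreal (g z * g y) * indicator {t..} (z - y)"
      by (cases "t \<le> z - y") (auto simp: ennreal_mult g0 indicator_def)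
  qed
  finally show ?thesis by simp
qed

lemma dbl_one: "(\<integral>\<^sup>+x. (\<integral>\<^sup>+y. ennreal (g x * g y) \<partial>lborel) \<partial>lborel) = 1"
proof -
  have "(\<integral>\<^sup>+x. (\<integral>\<^sup>+y. ennreal (g x * g y) \<partial>lborel) \<partial>lborel)
      = (\<integral>\<^sup>+x. ennreal (g x) * (\<integral>\<^sup>+y. ennreal (g y) \<partial>lborel) \<partial>lborel)"
    by (intro nn_integral_cong) (simp add: ennreal_mult g0 nn_integral_cmult)
  also have "\<dots> = 1" by (simp add: g1 nn_integral_multc)
  finally show ?thesis .
qed

lemma S0: "1/2 \<le> S 0"
proof -
  have sw: "(\<integral>\<^sup>+x. (\<integral>\<^sup>+y. ennreal (g x * g y) * indicator {0..} (y - x) \<partial>lborel) \<partial>lborel) = Pe 0"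
  proof -
    have "(\<integral>\<^sup>+x. (\<integral>\<^sup>+y. ennreal (g x * g y) * indicator {0..} (y - x) \<partial>lborel) \<partial>lborel)
        = (\<integral>\<^sup>+y. (\<integral>\<^sup>+x. ennreal (g x * g y) * indicator {0..} (y - x) \<partial>lborel) \<partial>lborel)"
      by (rule lborel_pair.Fubini') measurable
    also have "\<dots> = Pe 0" unfolding Pe_def
      by (intro nn_integral_cong) (simp add: mult.commute)
    finally show ?thesis .
  qed
  have "1 = (\<integral>\<^sup>+x. (\<integral>\<^sup>+y. ennreal (g x * g y) \<partial>lborel) \<partial>lborel)" by (simp add: dbl_one)
  also have "\<dots> \<le> (\<integral>\<^sup>+x. (\<integral>\<^sup>+y. ennreal (g x * g y) * indicator {0..} (x - y)
                      + ennreal (g x * g y) * indicator {0..} (y - x) \<partial>lborel) \<partial>lborel)"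
    by (intro nn_integral_mono) (auto simp: indicator_def)
  also have "\<dots> = (\<integral>\<^sup>+x. (\<integral>\<^sup>+y. ennreal (g x * g y) * indicator {0..} (x - y) \<partial>lborel)
                    + (\<integral>\<^sup>+y. ennreal (g x * g y) * indicator {0..} (y - x) \<partial>lborel) \<partial>lborel)"
    by (intro nn_integral_cong nn_integral_add) measurable
  also have "\<dots> = (\<integral>\<^sup>+x. (\<integral>\<^sup>+y. ennreal (g x * g y) * indicator {0..} (x - y) \<partial>lborel) \<partial>lborel)
                    + (\<integral>\<^sup>+x. (\<integral>\<^sup>+y. ennreal (g x * g y) * indicator {0..} (y - x) \<partial>lborel) \<partial>lborel)"
    by (rule nn_integral_add) measurable
  also have "\<dots> = Pe 0 + Pe 0"
    unfolding sw by (simp add: Pe_def)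
  finally have 1: "1 \<le> Pe 0 + Pe 0" .
  have "Pe 0 + Pe 0 = ennreal (S 0 + S 0)" unfolding Pe_S by (rule ennreal_plus[symmetric]) (simp_all add: S_nn)
  with 1 have "ennreal 1 \<le> ennreal (S 0 + S 0)" by simp
  moreover have "0 \<le> S 0 + S 0" using S_nn[of 0] by simp
  ultimately have "1 \<le> S 0 + S 0" using ennreal_le_iff by blast
  then show ?thesis by simp
qed

lemma nbu: "0 \<le> s \<Longrightarrow> 0 \<le> u \<Longrightarrow> Pe (s+u) \<le> 2 * Pe s * Pe u"
proof -
  assume su: "0 \<le> s" "0 \<le> u"
  have "S (s+u) * S 0 \<le> S s * S u" by (rule lc_nbu[OF lc_S su])
  moreover have "S (s+u) * (1/2) \<le> S (s+u) * S 0" using S0 S_nn by (intro mult_left_mono) auto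
  ultimately have "S (s+u) \<le> 2 * S s * S u" by simp
  then have "ennreal (S (s+u)) \<le> ennreal (2 * S s * S u)" by (rule ennreal_leI)
  then show ?thesis by (simp add: Pe_S ennreal_mult S_nn)
qed

end


lemma maxpos: "ennreal (max d 0) = (\<integral>\<^sup>+t. indicator {0..} t * indicator {t..} d \<partial>lborel)"
proof -
  have "(\<lambda>t. indicator {0..} t * indicator {t..} d :: ennreal) = indicator {0..d}"
    by (auto simp: indicator_def fun_eq_iff)
  then show ?thesis by (simp add: emeasure_lborel_Icc_eq max_def)
qed

context lcd begin

definition R1 :: ennreal where "R1 = (\<integral>\<^sup>+t. indicator {0..} t * Pe t \<partial>lborel)"

lemma Q1pos: "(\<integral>\<^sup>+x. (\<integral>\<^sup>+y. ennreal (g x * g y) * ennreal (max (x - y) 0) \<partial>lborel) \<partial>lborel) = R1"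
proof -
  have "(\<integral>\<^sup>+x. (\<integral>\<^sup>+y. ennreal (g x * g y) * ennreal (max (x - y) 0) \<partial>lborel) \<partial>lborel)
      = (\<integral>\<^sup>+x. (\<integral>\<^sup>+y. (\<integral>\<^sup>+t. ennreal (g x * g y) * (indicator {0..} t * indicator {t..} (x - y)) \<partial>lborel) \<partial>lborel) \<partial>lborel)"
    unfolding maxpos by (intro nn_integral_cong nn_integral_cmult[symmetric]) measurable
  also have "\<dots> = (\<integral>\<^sup>+t. (\<integral>\<^sup>+x. (\<integral>\<^sup>+y. ennreal (g x * g y) * (indicator {0..} t * indicator {t..} (x - y)) \<partial>lborel) \<partial>lborel) \<partial>lborel)"
    by (rule tri_swap) measurable
  also have "\<dots> = (\<integral>\<^sup>+t. indicator {0..} t * (\<integral>\<^sup>+x. (\<integral>\<^sup>+y. ennreal (g x * g y) * indicator {t..} (x - y) \<partial>lborel) \<partial>lborel) \<partial>lborel)"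
  proof (intro nn_integral_cong)
    fix t
    have "(\<integral>\<^sup>+x. (\<integral>\<^sup>+y. ennreal (g x * g y) * (indicator {0..} t * indicator {t..} (x - y)) \<partial>lborel) \<partial>lborel)
        = (\<integral>\<^sup>+x. indicator {0..} t * (\<integral>\<^sup>+y. ennreal (g x * g y) * indicator {t..} (x - y) \<partial>lborel) \<partial>lborel)"
    proof (intro nn_integral_cong)
      fix x
      have "(\<integral>\<^sup>+y. ennreal (g x * g y) * (indicator {0..} t * indicator {t..} (x - y)) \<partial>lborel)
          = (\<integral>\<^sup>+y. indicator {0..} t * (ennreal (g x * g y) * indicator {t..} (x - y)) \<partial>lborel)"
        by (simp add: mult_ac)
      also have "\<dots> = indicator {0..} t * (\<integral>\<^sup>+y. ennreal (g x * g y) * indicator {t..} (x - y) \<partial>lborel)"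
        by (rule nn_integral_cmult) measurable
      finally show "(\<integral>\<^sup>+y. ennreal (g x * g y) * (indicator {0..} t * indicator {t..} (x - y)) \<partial>lborel)
          = indicator {0..} t * (\<integral>\<^sup>+y. ennreal (g x * g y) * indicator {t..} (x - y) \<partial>lborel)" .
    qed
    also have "\<dots> = indicator {0..} t * (\<integral>\<^sup>+x. (\<integral>\<^sup>+y. ennreal (g x * g y) * indicator {t..} (x - y) \<partial>lborel) \<partial>lborel)"
      by (rule nn_integral_cmult) measurable
    finally show "(\<integral>\<^sup>+x. (\<integral>\<^sup>+y. ennreal (g x * g y) * (indicator {0..} t * indicator {t..} (x - y)) \<partial>lborel) \<partial>lborel)
        = indicator {0..} t * (\<integral>\<^sup>+x. (\<integral>\<^sup>+y. ennreal (g x * g y) * indicator {t..} (x - y) \<partial>lborel) \<partial>lborel)" .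
  qed
  also have "\<dots> = R1" unfolding R1_def Pe_def ..
  finally show ?thesis .
qed

end


lemma lin2:
  fixes F G :: "real \<Rightarrow> real \<Rightarrow> ennreal"
  assumes F: "case_prod F \<in> borel_measurable (lborel \<Otimes>\<^sub>M lborel)"
    and G: "case_prod G \<in> borel_measurable (lborel \<Otimes>\<^sub>M lborel)"
  shows "(\<integral>\<^sup>+x. (\<integral>\<^sup>+y. a * F x y + b * G x y \<partial>lborel) \<partial>lborel)
       = a * (\<integral>\<^sup>+x. (\<integral>\<^sup>+y. F x y \<partial>lborel) \<partial>lborel) + b * (\<integral>\<^sup>+x. (\<integral>\<^sup>+y. G x y \<partial>lborel) \<partial>lborel)"
proof -
  have Fy: "(\<lambda>y. F x y) \<in> borel_measurable lborel" for x
    using measurable_Pair2[OF F, of x] by simp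
  have Gy: "(\<lambda>y. G x y) \<in> borel_measurable lborel" for x
    using measurable_Pair2[OF G, of x] by simp
  have Fx: "(\<lambda>x. \<integral>\<^sup>+y. F x y \<partial>lborel) \<in> borel_measurable lborel"
    by (rule lborel.borel_measurable_nn_integral) (use F in simp)
  have Gx: "(\<lambda>x. \<integral>\<^sup>+y. G x y \<partial>lborel) \<in> borel_measurable lborel"
    by (rule lborel.borel_measurable_nn_integral) (use G in simp)
  have "(\<integral>\<^sup>+x. (\<integral>\<^sup>+y. a * F x y + b * G x y \<partial>lborel) \<partial>lborel)
      = (\<integral>\<^sup>+x. a * (\<integral>\<^sup>+y. F x y \<partial>lborel) + b * (\<integral>\<^sup>+y. G x y \<partial>lborel) \<partial>lborel)"
    using Fy Gy by (intro nn_integral_cong) (simp add: nn_integral_add nn_integral_cmult)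
  also have "\<dots> = a * (\<integral>\<^sup>+x. (\<integral>\<^sup>+y. F x y \<partial>lborel) \<partial>lborel) + b * (\<integral>\<^sup>+x. (\<integral>\<^sup>+y. G x y \<partial>lborel) \<partial>lborel)"
    using Fx Gx by (simp add: nn_integral_add nn_integral_cmult)
  finally show ?thesis .
qed

lemma sq_bound:
  "ennreal ((max d 0)\<^sup>2) \<le> (\<integral>\<^sup>+s. (\<integral>\<^sup>+t. indicator {0..} s * indicator {0..} t *
      (indicator {s..} t * indicator {t..} d + indicator {t..} s * indicator {s..} d) \<partial>lborel) \<partial>lborel)"
proof -
  have "ennreal ((max d 0)\<^sup>2) = ennreal (max d 0) * ennreal (max d 0)"
    by (simp add: power2_eq_square ennreal_mult)
  also have "\<dots> = (\<integral>\<^sup>+s. indicator {0..} s * indicator {s..} d \<partial>lborel) * (\<integral>\<^sup>+t. indicator {0..} t * indicator {t..} d \<partial>lborel)"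
    unfolding maxpos ..
  also have "\<dots> = (\<integral>\<^sup>+s. indicator {0..} s * indicator {s..} d * (\<integral>\<^sup>+t. indicator {0..} t * indicator {t..} d \<partial>lborel) \<partial>lborel)"
    by (rule nn_integral_multc[symmetric]) measurable
  also have "\<dots> = (\<integral>\<^sup>+s. (\<integral>\<^sup>+t. (indicator {0..} s * indicator {s..} d) * (indicator {0..} t * indicator {t..} d) \<partial>lborel) \<partial>lborel)"
    by (intro nn_integral_cong nn_integral_cmult[symmetric]) measurable
  also have "\<dots> \<le> (\<integral>\<^sup>+s. (\<integral>\<^sup>+t. indicator {0..} s * indicator {0..} t *
      (indicator {s..} t * indicator {t..} d + indicator {t..} s * indicator {s..} d) \<partial>lborel) \<partial>lborel)"
    by (intro nn_integral_mono) (auto simp: indicator_def)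
  finally show ?thesis .
qed

context lcd begin

lemma inner_H:
  "(\<integral>\<^sup>+x. (\<integral>\<^sup>+y. ennreal (g x * g y) * (indicator {0..} s * indicator {0..} t *
      (indicator {s..} t * indicator {t..} (x - y) + indicator {t..} s * indicator {s..} (x - y))) \<partial>lborel) \<partial>lborel)
   = (indicator {0..} s * indicator {0..} t * indicator {s..} t) * Pe t
     + (indicator {0..} s * indicator {0..} t * indicator {t..} s) * Pe s"
proof -
  have "(\<integral>\<^sup>+x. (\<integral>\<^sup>+y. ennreal (g x * g y) * (indicator {0..} s * indicator {0..} t *
      (indicator {s..} t * indicator {t..} (x - y) + indicator {t..} s * indicator {s..} (x - y))) \<partial>lborel) \<partial>lborel)
    = (\<integral>\<^sup>+x. (\<integral>\<^sup>+y. (indicator {0..} s * indicator {0..} t * indicator {s..} t) * (ennreal (g x * g y) * indicator {t..} (x - y))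
        + (indicator {0..} s * indicator {0..} t * indicator {t..} s) * (ennreal (g x * g y) * indicator {s..} (x - y)) \<partial>lborel) \<partial>lborel)"
    by (intro nn_integral_cong) (simp add: distrib_left mult_ac)
  also have "\<dots> = (indicator {0..} s * indicator {0..} t * indicator {s..} t) * Pe t
     + (indicator {0..} s * indicator {0..} t * indicator {t..} s) * Pe s"
    unfolding Pe_def by (rule lin2) measurable
  finally show ?thesis .
qed

end


context lcd begin

lemma T1_bound:
  "(\<integral>\<^sup>+s. (\<integral>\<^sup>+t. (indicator {0..} s * indicator {0..} t * indicator {s..} t) * Pe t \<partial>lborel) \<partial>lborel)
   \<le> 2 * R1 * R1"
proof -
  have inner: "(\<integral>\<^sup>+t. (indicator {0..} s * indicator {0..} t * indicator {s..} t) * Pe t \<partial>lborel)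
      \<le> (2 * R1) * (indicator {0..} s * Pe s)" for s
  proof (cases "0 \<le> s")
    case False then show ?thesis by (simp add: indicator_def)
  next
    case True
    have "(\<integral>\<^sup>+t. (indicator {0..} s * indicator {0..} t * indicator {s..} t) * Pe t \<partial>lborel)
        = (\<integral>\<^sup>+t. indicator {s..} t * Pe t \<partial>lborel)"
      using True by (intro nn_integral_cong) (auto simp: indicator_def)
    also have "\<dots> = (\<integral>\<^sup>+u. indicator {s..} (s + u) * Pe (s + u) \<partial>lborel)"
    proof -
      have meas: "(\<lambda>t. indicator {s..} t * Pe t) \<in> borel_measurable borel" by measurable
      show ?thesis using nn_integral_real_affine[OF meas, of 1 s] by simp
    qed
    also have "\<dots> = (\<integral>\<^sup>+u. indicator {0..} u * Pe (s + u) \<partial>lborel)"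
      by (intro nn_integral_cong) (simp add: indicator_def)
    also have "\<dots> \<le> (\<integral>\<^sup>+u. indicator {0..} u * (2 * Pe s * Pe u) \<partial>lborel)"
      using True by (intro nn_integral_mono) (auto simp: indicator_def nbu)
    also have "\<dots> = (\<integral>\<^sup>+u. (2 * Pe s) * (indicator {0..} u * Pe u) \<partial>lborel)"
      by (simp add: mult_ac)
    also have "\<dots> = (2 * Pe s) * R1" unfolding R1_def by (rule nn_integral_cmult) measurable
    also have "\<dots> = (2 * R1) * (indicator {0..} s * Pe s)" using True by (simp add: mult_ac)
    finally show ?thesis .
  qed
  have "(\<integral>\<^sup>+s. (\<integral>\<^sup>+t. (indicator {0..} s * indicator {0..} t * indicator {s..} t) * Pe t \<partial>lborel) \<partial>lborel)
      \<le> (\<integral>\<^sup>+s. (2 * R1) * (indicator {0..} s * Pe s) \<partial>lborel)"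
    by (intro nn_integral_mono inner)
  also have "\<dots> = (2 * R1) * R1" unfolding R1_def by (rule nn_integral_cmult) measurable
  finally show ?thesis by (simp add: mult_ac)
qed

lemma T2_eq:
  "(\<integral>\<^sup>+s. (\<integral>\<^sup>+t. (indicator {0..} s * indicator {0..} t * indicator {t..} s) * Pe s \<partial>lborel) \<partial>lborel)
   = (\<integral>\<^sup>+s. (\<integral>\<^sup>+t. (indicator {0..} s * indicator {0..} t * indicator {s..} t) * Pe t \<partial>lborel) \<partial>lborel)"
proof -
  have "(\<integral>\<^sup>+s. (\<integral>\<^sup>+t. (indicator {0..} s * indicator {0..} t * indicator {t..} s) * Pe s \<partial>lborel) \<partial>lborel)
      = (\<integral>\<^sup>+t. (\<integral>\<^sup>+s. (indicator {0..} s * indicator {0..} t * indicator {t..} s) * Pe s \<partial>lborel) \<partial>lborel)"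
    by (rule lborel_pair.Fubini'[symmetric]) measurable
  also have "\<dots> = (\<integral>\<^sup>+s. (\<integral>\<^sup>+t. (indicator {0..} s * indicator {0..} t * indicator {s..} t) * Pe t \<partial>lborel) \<partial>lborel)"
    by (simp add: mult_ac)
  finally show ?thesis .
qed

lemma Q2pos:
  "(\<integral>\<^sup>+x. (\<integral>\<^sup>+y. ennreal (g x * g y) * ennreal ((max (x - y) 0)\<^sup>2) \<partial>lborel) \<partial>lborel) \<le> 4 * R1 * R1"
proof -
  have "(\<integral>\<^sup>+x. (\<integral>\<^sup>+y. ennreal (g x * g y) * ennreal ((max (x - y) 0)\<^sup>2) \<partial>lborel) \<partial>lborel)
    \<le> (\<integral>\<^sup>+x. (\<integral>\<^sup>+y. ennreal (g x * g y) * (\<integral>\<^sup>+s. (\<integral>\<^sup>+t. indicator {0..} s * indicator {0..} t *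
      (indicator {s..} t * indicator {t..} (x - y) + indicator {t..} s * indicator {s..} (x - y)) \<partial>lborel) \<partial>lborel) \<partial>lborel) \<partial>lborel)"
    by (intro nn_integral_mono mult_left_mono sq_bound) auto
  also have "\<dots> = (\<integral>\<^sup>+x. (\<integral>\<^sup>+y. (\<integral>\<^sup>+s. (\<integral>\<^sup>+t. ennreal (g x * g y) * (indicator {0..} s * indicator {0..} t *
      (indicator {s..} t * indicator {t..} (x - y) + indicator {t..} s * indicator {s..} (x - y))) \<partial>lborel) \<partial>lborel) \<partial>lborel) \<partial>lborel)"
  proof (intro nn_integral_cong)
    fix x y
    have "ennreal (g x * g y) * (\<integral>\<^sup>+s. (\<integral>\<^sup>+t. indicator {0..} s * indicator {0..} t *
      (indicator {s..} t * indicator {t..} (x - y) + indicator {t..} s * indicator {s..} (x - y)) \<partial>lborel) \<partial>lborel)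
      = (\<integral>\<^sup>+s. ennreal (g x * g y) * (\<integral>\<^sup>+t. indicator {0..} s * indicator {0..} t *
      (indicator {s..} t * indicator {t..} (x - y) + indicator {t..} s * indicator {s..} (x - y)) \<partial>lborel) \<partial>lborel)"
      by (rule nn_integral_cmult[symmetric]) measurable
    also have "\<dots> = (\<integral>\<^sup>+s. (\<integral>\<^sup>+t. ennreal (g x * g y) * (indicator {0..} s * indicator {0..} t *
      (indicator {s..} t * indicator {t..} (x - y) + indicator {t..} s * indicator {s..} (x - y))) \<partial>lborel) \<partial>lborel)"
      by (intro nn_integral_cong nn_integral_cmult[symmetric]) measurable
    finally show "ennreal (g x * g y) * (\<integral>\<^sup>+s. (\<integral>\<^sup>+t. indicator {0..} s * indicator {0..} t *
      (indicator {s..} t * indicator {t..} (x - y) + indicator {t..} s * indicator {s..} (x - y)) \<partial>lborel) \<partial>lborel)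
      = (\<integral>\<^sup>+s. (\<integral>\<^sup>+t. ennreal (g x * g y) * (indicator {0..} s * indicator {0..} t *
      (indicator {s..} t * indicator {t..} (x - y) + indicator {t..} s * indicator {s..} (x - y))) \<partial>lborel) \<partial>lborel)" .
  qed
  also have "\<dots> = (\<integral>\<^sup>+s. (\<integral>\<^sup>+x. (\<integral>\<^sup>+y. (\<integral>\<^sup>+t. ennreal (g x * g y) * (indicator {0..} s * indicator {0..} t *
      (indicator {s..} t * indicator {t..} (x - y) + indicator {t..} s * indicator {s..} (x - y))) \<partial>lborel) \<partial>lborel) \<partial>lborel) \<partial>lborel)"
    by (rule tri_swap) measurable
  also have "\<dots> = (\<integral>\<^sup>+s. (\<integral>\<^sup>+t. (\<integral>\<^sup>+x. (\<integral>\<^sup>+y. ennreal (g x * g y) * (indicator {0..} s * indicator {0..} t *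
      (indicator {s..} t * indicator {t..} (x - y) + indicator {t..} s * indicator {s..} (x - y))) \<partial>lborel) \<partial>lborel) \<partial>lborel) \<partial>lborel)"
    by (intro nn_integral_cong tri_swap) measurable
  also have "\<dots> = (\<integral>\<^sup>+s. (\<integral>\<^sup>+t. (indicator {0..} s * indicator {0..} t * indicator {s..} t) * Pe t
     + (indicator {0..} s * indicator {0..} t * indicator {t..} s) * Pe s \<partial>lborel) \<partial>lborel)"
    by (intro nn_integral_cong inner_H)
  also have "\<dots> = (\<integral>\<^sup>+s. (\<integral>\<^sup>+t. (indicator {0..} s * indicator {0..} t * indicator {s..} t) * Pe t \<partial>lborel)
     + (\<integral>\<^sup>+t. (indicator {0..} s * indicator {0..} t * indicator {t..} s) * Pe s \<partial>lborel) \<partial>lborel)"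
    by (intro nn_integral_cong nn_integral_add) measurable
  also have "\<dots> = (\<integral>\<^sup>+s. (\<integral>\<^sup>+t. (indicator {0..} s * indicator {0..} t * indicator {s..} t) * Pe t \<partial>lborel) \<partial>lborel)
     + (\<integral>\<^sup>+s. (\<integral>\<^sup>+t. (indicator {0..} s * indicator {0..} t * indicator {t..} s) * Pe s \<partial>lborel) \<partial>lborel)"
    by (rule nn_integral_add) measurable
  also have "\<dots> \<le> 2 * R1 * R1 + 2 * R1 * R1"
    unfolding T2_eq by (intro add_mono T1_bound)
  also have "\<dots> = 4 * R1 * R1"
  proof -
    have e: "(4::ennreal) = 2 + 2" by simp
    have "(4::ennreal) * R1 * R1 = (2 + 2) * R1 * R1" by (simp only: e)
    also have "\<dots> = 2 * R1 * R1 + 2 * R1 * R1" by (simp only: distrib_right)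
    finally show ?thesis by simp
  qed
  finally show ?thesis .
qed

end


context lcd begin

lemma swap_sym:
  fixes \<psi> :: "real \<Rightarrow> ennreal"
  assumes [measurable]: "\<psi> \<in> borel_measurable borel"
  shows "(\<integral>\<^sup>+x. (\<integral>\<^sup>+y. ennreal (g x * g y) * \<psi> (y - x) \<partial>lborel) \<partial>lborel)
       = (\<integral>\<^sup>+x. (\<integral>\<^sup>+y. ennreal (g x * g y) * \<psi> (x - y) \<partial>lborel) \<partial>lborel)"
proof -
  have "(\<integral>\<^sup>+x. (\<integral>\<^sup>+y. ennreal (g x * g y) * \<psi> (y - x) \<partial>lborel) \<partial>lborel)
      = (\<integral>\<^sup>+y. (\<integral>\<^sup>+x. ennreal (g x * g y) * \<psi> (y - x) \<partial>lborel) \<partial>lborel)"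
    by (rule lborel_pair.Fubini'[symmetric]) measurable
  also have "\<dots> = (\<integral>\<^sup>+x. (\<integral>\<^sup>+y. ennreal (g x * g y) * \<psi> (x - y) \<partial>lborel) \<partial>lborel)"
    by (simp add: mult.commute)
  finally show ?thesis .
qed

lemma split_sym:
  fixes \<psi> :: "real \<Rightarrow> ennreal" and F :: "real \<Rightarrow> real \<Rightarrow> ennreal"
  assumes [measurable]: "\<psi> \<in> borel_measurable borel"
    and Fm: "case_prod F \<in> borel_measurable (lborel \<Otimes>\<^sub>M lborel)"
    and pw: "\<And>x y. F x y = ennreal (g x * g y) * \<psi> (x - y) + ennreal (g x * g y) * \<psi> (y - x)"
  shows "(\<integral>\<^sup>+x. (\<integral>\<^sup>+y. F x y \<partial>lborel) \<partial>lborel)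
       = 2 * (\<integral>\<^sup>+x. (\<integral>\<^sup>+y. ennreal (g x * g y) * \<psi> (x - y) \<partial>lborel) \<partial>lborel)"
proof -
  have "(\<integral>\<^sup>+x. (\<integral>\<^sup>+y. F x y \<partial>lborel) \<partial>lborel)
      = (\<integral>\<^sup>+x. (\<integral>\<^sup>+y. 1 * (ennreal (g x * g y) * \<psi> (x - y)) + 1 * (ennreal (g x * g y) * \<psi> (y - x)) \<partial>lborel) \<partial>lborel)"
    by (simp add: pw)
  also have "\<dots> = 1 * (\<integral>\<^sup>+x. (\<integral>\<^sup>+y. ennreal (g x * g y) * \<psi> (x - y) \<partial>lborel) \<partial>lborel)
                 + 1 * (\<integral>\<^sup>+x. (\<integral>\<^sup>+y. ennreal (g x * g y) * \<psi> (y - x) \<partial>lborel) \<partial>lborel)"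
    by (rule lin2) measurable
  also have "\<dots> = 2 * (\<integral>\<^sup>+x. (\<integral>\<^sup>+y. ennreal (g x * g y) * \<psi> (x - y) \<partial>lborel) \<partial>lborel)"
    by (simp add: swap_sym mult_2)
  finally show ?thesis .
qed

definition Q1 where "Q1 = (\<integral>\<^sup>+x. (\<integral>\<^sup>+y. ennreal (\<bar>x - y\<bar> * g x * g y) \<partial>lborel) \<partial>lborel)"
definition Q2 where "Q2 = (\<integral>\<^sup>+x. (\<integral>\<^sup>+y. ennreal ((x - y)\<^sup>2 * g x * g y) \<partial>lborel) \<partial>lborel)"

lemma Q1_eq: "Q1 = 2 * R1"
proof -
  have "Q1 = 2 * (\<integral>\<^sup>+x. (\<integral>\<^sup>+y. ennreal (g x * g y) * (\<lambda>d. ennreal (max d 0)) (x - y) \<partial>lborel) \<partial>lborel)"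
    unfolding Q1_def
  proof (rule split_sym)
    show "(\<lambda>d. ennreal (max d 0)) \<in> borel_measurable borel" by measurable
    show "(\<lambda>(x, y). ennreal (\<bar>x - y\<bar> * g x * g y)) \<in> borel_measurable (lborel \<Otimes>\<^sub>M lborel)" by measurable
    fix x y
    show "ennreal (\<bar>x - y\<bar> * g x * g y) = ennreal (g x * g y) * ennreal (max (x - y) 0) + ennreal (g x * g y) * ennreal (max (y - x) 0)"
      using g0[of x] g0[of y]
      by (cases "x \<le> y") (auto simp: ennreal_mult[symmetric] mult_ac max_def)
  qed
  then show ?thesis using Q1pos by simp
qed

lemma Q2_le: "Q2 \<le> 8 * R1 * R1"
proof -
  have "Q2 = 2 * (\<integral>\<^sup>+x. (\<integral>\<^sup>+y. ennreal (g x * g y) * (\<lambda>d. ennreal ((max d 0)\<^sup>2)) (x - y) \<partial>lborel) \<partial>lborel)"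
    unfolding Q2_def
  proof (rule split_sym)
    show "(\<lambda>d. ennreal ((max d 0)\<^sup>2)) \<in> borel_measurable borel" by measurable
    show "(\<lambda>(x, y). ennreal ((x - y)\<^sup>2 * g x * g y)) \<in> borel_measurable (lborel \<Otimes>\<^sub>M lborel)" by measurable
    fix x y
    show "ennreal ((x - y)\<^sup>2 * g x * g y) = ennreal (g x * g y) * ennreal ((max (x - y) 0)\<^sup>2) + ennreal (g x * g y) * ennreal ((max (y - x) 0)\<^sup>2)"
      using g0[of x] g0[of y]
      by (cases "x \<le> y") (auto simp: ennreal_mult[symmetric] mult_ac max_def power2_commute)
  qed
  also have "\<dots> \<le> 2 * (4 * R1 * R1)"
    using Q2pos by (intro mult_left_mono) auto
  also have "\<dots> = 8 * R1 * R1" by (simp add: mult_ac)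
  finally show ?thesis .
qed

end


lemma bochner2:
  fixes F :: "real \<Rightarrow> real \<Rightarrow> real"
  assumes Fm: "case_prod F \<in> borel_measurable (lborel \<Otimes>\<^sub>M lborel)"
    and F0: "\<And>x y. 0 \<le> F x y"
    and fin: "\<And>x. (\<integral>\<^sup>+y. ennreal (F x y) \<partial>lborel) < \<infinity>"
  shows "(\<integral>x. (\<integral>y. F x y \<partial>lborel) \<partial>lborel) = enn2real (\<integral>\<^sup>+x. (\<integral>\<^sup>+y. ennreal (F x y) \<partial>lborel) \<partial>lborel)"
proof -
  have Fy: "(\<lambda>y. F x y) \<in> borel_measurable lborel" for x
    using measurable_Pair2[OF Fm, of x] by simp
  have Fx: "(\<lambda>x. \<integral>\<^sup>+y. ennreal (F x y) \<partial>lborel) \<in> borel_measurable lborel"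
    by (rule lborel.borel_measurable_nn_integral) (use Fm in simp)
  have "(\<integral>x. (\<integral>y. F x y \<partial>lborel) \<partial>lborel) = (\<integral>x. enn2real (\<integral>\<^sup>+y. ennreal (F x y) \<partial>lborel) \<partial>lborel)"
    by (intro Bochner_Integration.integral_cong refl integral_nn_real Fy F0)
  also have "\<dots> = enn2real (\<integral>\<^sup>+x. ennreal (enn2real (\<integral>\<^sup>+y. ennreal (F x y) \<partial>lborel)) \<partial>lborel)"
    by (rule integral_nn_real) (use Fx in auto)
  also have "\<dots> = enn2real (\<integral>\<^sup>+x. (\<integral>\<^sup>+y. ennreal (F x y) \<partial>lborel) \<partial>lborel)"
    using fin by (simp add: ennreal_enn2real less_top)
  finally show ?thesis .
qed

context lcd begin

definition m2 where "m2 = (\<integral>\<^sup>+y. ennreal (y\<^sup>2 * g y) \<partial>lborel)"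

lemma I2_le: "(\<integral>\<^sup>+y. ennreal ((x - y)\<^sup>2 * g x * g y) \<partial>lborel)
   \<le> ennreal (2 * (x\<^sup>2 * g x)) + ennreal (2 * g x) * m2"
proof -
  have "(\<integral>\<^sup>+y. ennreal ((x - y)\<^sup>2 * g x * g y) \<partial>lborel)
      \<le> (\<integral>\<^sup>+y. ennreal (2 * (x\<^sup>2 * g x)) * ennreal (g y) + ennreal (2 * g x) * ennreal (y\<^sup>2 * g y) \<partial>lborel)"
  proof (intro nn_integral_mono)
    fix y
    have e: "2 * x\<^sup>2 + 2 * y\<^sup>2 - (x - y)\<^sup>2 = (x + y)\<^sup>2" by (simp add: power2_eq_square algebra_simps)
    have "0 \<le> (x + y)\<^sup>2" by (rule zero_le_power2)
    then have "(x - y)\<^sup>2 \<le> 2 * x\<^sup>2 + 2 * y\<^sup>2" using e by linarith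
    then have "(x - y)\<^sup>2 * (g x * g y) \<le> (2 * x\<^sup>2 + 2 * y\<^sup>2) * (g x * g y)"
      using g0[of x] g0[of y] by (intro mult_right_mono) auto
    then have "(x - y)\<^sup>2 * g x * g y \<le> 2 * (x\<^sup>2 * g x) * g y + 2 * g x * (y\<^sup>2 * g y)"
      by (simp add: algebra_simps)
    then have "ennreal ((x - y)\<^sup>2 * g x * g y) \<le> ennreal (2 * (x\<^sup>2 * g x) * g y + 2 * g x * (y\<^sup>2 * g y))"
      by (rule ennreal_leI)
    also have "\<dots> = ennreal (2 * (x\<^sup>2 * g x)) * ennreal (g y) + ennreal (2 * g x) * ennreal (y\<^sup>2 * g y)"
      using g0[of x] g0[of y] by (simp add: ennreal_plus ennreal_mult)
    finally show "ennreal ((x - y)\<^sup>2 * g x * g y) \<le> ennreal (2 * (x\<^sup>2 * g x)) * ennreal (g y) + ennreal (2 * g x) * ennreal (y\<^sup>2 * g y)" .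
  qed
  also have "\<dots> = ennreal (2 * (x\<^sup>2 * g x)) * (\<integral>\<^sup>+y. ennreal (g y) \<partial>lborel) + ennreal (2 * g x) * m2"
    unfolding m2_def by (simp add: nn_integral_add nn_integral_cmult)
  also have "\<dots> = ennreal (2 * (x\<^sup>2 * g x)) + ennreal (2 * g x) * m2" by (simp add: g1)
  finally show ?thesis .
qed

lemma m2_fin: "m2 < \<infinity>" using g2 by (simp add: m2_def)

lemma I2_fin: "(\<integral>\<^sup>+y. ennreal ((x - y)\<^sup>2 * g x * g y) \<partial>lborel) < \<infinity>"
proof (rule le_less_trans[OF I2_le])
  show "ennreal (2 * (x\<^sup>2 * g x)) + ennreal (2 * g x) * m2 < \<infinity>"
    using m2_fin by (simp add: ennreal_mult_less_top)
qed

lemma Q2_fin: "Q2 < \<infinity>"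
proof -
  have "Q2 \<le> (\<integral>\<^sup>+x. ennreal (2 * (x\<^sup>2 * g x)) + ennreal (2 * g x) * m2 \<partial>lborel)"
    unfolding Q2_def by (intro nn_integral_mono I2_le)
  also have "\<dots> = (\<integral>\<^sup>+x. 2 * ennreal (x\<^sup>2 * g x) \<partial>lborel) + (\<integral>\<^sup>+x. 2 * ennreal (g x) \<partial>lborel) * m2"
    using g0 by (simp add: nn_integral_add nn_integral_multc ennreal_mult)
  also have "\<dots> = 2 * m2 + 2 * m2"
    by (simp add: nn_integral_cmult g1 m2_def)
  also have "\<dots> < \<infinity>" using m2_fin by (simp add: ennreal_mult_less_top)
  finally show ?thesis .
qed

lemma I1_le: "(\<integral>\<^sup>+y. ennreal (\<bar>x - y\<bar> * g x * g y) \<partial>lborel)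
   \<le> ennreal (g x) + (\<integral>\<^sup>+y. ennreal ((x - y)\<^sup>2 * g x * g y) \<partial>lborel)"
proof -
  have "(\<integral>\<^sup>+y. ennreal (\<bar>x - y\<bar> * g x * g y) \<partial>lborel)
      \<le> (\<integral>\<^sup>+y. ennreal (g x) * ennreal (g y) + ennreal ((x - y)\<^sup>2 * g x * g y) \<partial>lborel)"
  proof (intro nn_integral_mono)
    fix y
    have "\<bar>x - y\<bar> \<le> 1 + (x - y)\<^sup>2"
    proof (cases "\<bar>x - y\<bar> \<le> 1")
      case True
      have "0 \<le> (x - y)\<^sup>2" by (rule zero_le_power2)
      then show ?thesis using True by linarith
    next
      case False
      then have "\<bar>x - y\<bar> * 1 \<le> \<bar>x - y\<bar> * \<bar>x - y\<bar>" by (intro mult_left_mono) auto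
      also have "\<dots> = (x - y)\<^sup>2" by (simp add: power2_eq_square abs_mult_self_eq)
      finally show ?thesis by simp
    qed
    then have "\<bar>x - y\<bar> * (g x * g y) \<le> (1 + (x - y)\<^sup>2) * (g x * g y)"
      using g0[of x] g0[of y] by (intro mult_right_mono) auto
    then have "\<bar>x - y\<bar> * g x * g y \<le> g x * g y + (x - y)\<^sup>2 * g x * g y" by (simp add: algebra_simps)
    then have "ennreal (\<bar>x - y\<bar> * g x * g y) \<le> ennreal (g x * g y + (x - y)\<^sup>2 * g x * g y)" by (rule ennreal_leI)
    also have "\<dots> = ennreal (g x) * ennreal (g y) + ennreal ((x - y)\<^sup>2 * g x * g y)"
      using g0[of x] g0[of y] by (simp add: ennreal_plus ennreal_mult)
    finally show "ennreal (\<bar>x - y\<bar> * g x * g y) \<le> ennreal (g x) * ennreal (g y) + ennreal ((x - y)\<^sup>2 * g x * g y)" .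
  qed
  also have "\<dots> = ennreal (g x) + (\<integral>\<^sup>+y. ennreal ((x - y)\<^sup>2 * g x * g y) \<partial>lborel)"
    by (simp add: nn_integral_add nn_integral_cmult g1)
  finally show ?thesis .
qed

lemma I1_fin: "(\<integral>\<^sup>+y. ennreal (\<bar>x - y\<bar> * g x * g y) \<partial>lborel) < \<infinity>"
proof (rule le_less_trans[OF I1_le])
  show "ennreal (g x) + (\<integral>\<^sup>+y. ennreal ((x - y)\<^sup>2 * g x * g y) \<partial>lborel) < \<infinity>"
    using I2_fin[of x] by simp
qed

lemma Q1_fin: "Q1 < \<infinity>"
proof -
  have "Q1 \<le> (\<integral>\<^sup>+x. ennreal (g x) + (\<integral>\<^sup>+y. ennreal ((x - y)\<^sup>2 * g x * g y) \<partial>lborel) \<partial>lborel)"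
    unfolding Q1_def by (intro nn_integral_mono I1_le)
  also have "\<dots> = 1 + Q2" unfolding Q2_def by (simp add: nn_integral_add g1)
  also have "\<dots> < \<infinity>" using Q2_fin by simp
  finally show ?thesis .
qed

theorem core: "SD_dens g \<le> GMD_dens g"
proof -
  have G: "GMD_dens g = enn2real Q1"
    unfolding GMD_dens_def Q1_def
    by (rule bochner2) (use g0 I1_fin in \<open>auto intro: mult_nonneg_nonneg\<close>)
  have S2: "(\<integral>x. (\<integral>y. (x - y)\<^sup>2 * g x * g y \<partial>lborel) \<partial>lborel) = enn2real Q2"
    unfolding Q2_def
    by (rule bochner2) (use g0 I2_fin in \<open>auto intro: mult_nonneg_nonneg\<close>)
  have R1fin: "R1 < \<infinity>" using Q1_fin unfolding Q1_eq by (auto simp add: ennreal_mult_less_top)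
  define r where "r = enn2real R1"
  have Rr: "R1 = ennreal r" using R1fin by (simp add: r_def ennreal_enn2real less_top)
  have r0: "0 \<le> r" by (simp add: r_def)
  have q1: "enn2real Q1 = 2 * r" unfolding Q1_eq Rr using r0 by (simp add: enn2real_mult)
  have "Q2 \<le> ennreal (8 * r * r)" using Q2_le unfolding Rr using r0 by (simp add: ennreal_mult)
  then have "enn2real Q2 \<le> enn2real (ennreal (8 * r * r))" by (rule enn2real_mono) simp
  then have q2: "enn2real Q2 \<le> 8 * r * r" using r0 by simp
  have "SD_dens g = sqrt (1/2 * enn2real Q2)" unfolding SD_dens_def S2 ..
  also have "\<dots> \<le> sqrt ((2 * r)\<^sup>2)" using q2 by (intro real_sqrt_le_mono) (simp add: power2_eq_square)
  also have "\<dots> = 2 * r" unfolding real_sqrt_abs using r0 by simp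
  finally show ?thesis unfolding G q1 .
qed

end


lemma lc_const: "0 \<le> c \<Longrightarrow> lc (\<lambda>x. c)"
  unfolding lc_def
proof (intro conjI allI impI)
  fix x y l :: real assume c: "0 \<le> c" and l: "0 \<le> l" "l \<le> 1"
  show "c powr l * c powr (1-l) \<le> c"
  proof (cases "c = 0")
    case False then show ?thesis using c by (simp add: powr_add[symmetric])
  qed simp
qed simp

lemma lc_ind_greaterThan: "lc (\<lambda>x. indicator {u<..} x)"
  unfolding lc_def
proof (intro conjI allI impI)
  fix x show "0 \<le> (indicator {u<..} x :: real)" by simp
next
  fix x y l :: real assume l: "0 \<le> l" "l \<le> 1"
  show "(indicator {u<..} x :: real) powr l * indicator {u<..} y powr (1-l) \<le> indicator {u<..} (l*x+(1-l)*y)"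
  proof (cases "u < x \<and> u < y")
    case True
    then have "l*u+(1-l)*u < l*x+(1-l)*y"
    proof (cases "l = 0")
      case False
      then have "l*u < l*x" using l True by simp
      moreover have "(1-l)*u \<le> (1-l)*y" using l True by (intro mult_left_mono) auto
      ultimately show ?thesis by linarith
    next
      case True then show ?thesis using \<open>u < x \<and> u < y\<close> by simp
    qed
    then have "u < l*x+(1-l)*y" by (simp add: algebra_simps)
    then show ?thesis using True by (simp add: indicator_def)
  next
    case False then show ?thesis by (auto simp: indicator_def)
  qed
qed

lemma lcd_lc:
  assumes h0: "\<And>x. 0 \<le> h x" and lcd: "log_concave_density h"
  shows "lc h"
  unfolding lc_def
proof (intro conjI allI impI)
  fix x show "0 \<le> h x" by (rule h0)
next
  fix x y l :: real assume l: "0 \<le> l" "l \<le> 1"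
  show "h x powr l * h y powr (1-l) \<le> h (l*x+(1-l)*y)"
  proof (cases "h x = 0 \<or> h y = 0")
    case True then show ?thesis using h0 by auto
  next
    case False
    then have p: "0 < h x" "0 < h y" using h0[of x] h0[of y] by auto
    from lcd p l have m: "0 < h (l*x+(1-l)*y)"
      and ineq: "l * ln (h x) + (1-l) * ln (h y) \<le> ln (h (l*x+(1-l)*y))"
      unfolding log_concave_density_def by blast+
    have "h x powr l * h y powr (1-l) = exp (l * ln (h x) + (1-l) * ln (h y))"
      using p by (simp add: powr_def exp_add)
    also have "\<dots> \<le> exp (ln (h (l*x+(1-l)*y)))" using ineq by simp
    also have "\<dots> = h (l*x+(1-l)*y)" using m by simp
    finally show ?thesis .
  qed
qed

lemma trunc_lcd:
  fixes M :: "'a measure" and X :: "'a \<Rightarrow> real"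
  assumes P: "prob_space M"
    and D: "distributed M lborel X (\<lambda>x. ennreal (f x))"
    and f0: "\<And>x. 0 \<le> f x"
    and I2: "integrable M (\<lambda>\<omega>. (X \<omega>)\<^sup>2)"
    and AB: "A \<subseteq> B" and Ab[measurable]: "A \<in> sets borel" and Bb[measurable]: "B \<in> sets borel"
    and lcA: "lc (indicator A)"
    and pA: "0 < measure M {\<omega> \<in> space M. X \<omega> \<in> A}"
    and lch: "lc (\<lambda>x. indicator B x * f x / measure M {\<omega> \<in> space M. X \<omega> \<in> B})"
  shows "lcd (\<lambda>x. indicator A x * f x / measure M {\<omega> \<in> space M. X \<omega> \<in> A})"
proof -
  interpret prob_space M by (rule P)
  have fm[measurable]: "f \<in> borel_measurable borel"
    using distributed_real_measurable[OF _ D] f0 by simp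
  have Xm[measurable]: "X \<in> borel_measurable M" using distributed_measurable[OF D] by simp
  define pa where "pa = measure M {\<omega> \<in> space M. X \<omega> \<in> A}"
  define pb where "pb = measure M {\<omega> \<in> space M. X \<omega> \<in> B}"
  have pa0: "0 < pa" using pA by (simp add: pa_def)
  have "pa \<le> pb" unfolding pa_def pb_def using AB by (intro finite_measure_mono) auto
  then have pb0: "0 < pb" using pa0 by simp
  have emA: "(\<integral>\<^sup>+x. ennreal (f x) * indicator A x \<partial>lborel) = ennreal pa"
  proof -
    have "(\<integral>\<^sup>+x. ennreal (f x) * indicator A x \<partial>lborel) = emeasure M (X -` A \<inter> space M)"
      using distributed_emeasure[OF D, of A] by simp
    also have "X -` A \<inter> space M = {\<omega> \<in> space M. X \<omega> \<in> A}" by auto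
    finally show ?thesis by (simp add: emeasure_eq_measure pa_def)
  qed
  show ?thesis
  proof
    show "(\<lambda>x. indicator A x * f x / measure M {\<omega> \<in> space M. X \<omega> \<in> A}) \<in> borel_measurable borel"
      by measurable
    have eq: "(\<lambda>x. indicator A x * f x / measure M {\<omega> \<in> space M. X \<omega> \<in> A})
        = (\<lambda>x. (indicator A x * (indicator B x * f x / pb)) * (pb / pa))"
      using AB pb0 by (auto simp: fun_eq_iff indicator_def pa_def subset_iff)
    show "lc (\<lambda>x. indicator A x * f x / measure M {\<omega> \<in> space M. X \<omega> \<in> A})"
      unfolding eq
      by (intro lc_mult lcA lc_const) (use lch pb0 pa0 in \<open>auto simp: pb_def\<close>)
    have "(\<integral>\<^sup>+x. ennreal (indicator A x * f x / measure M {\<omega> \<in> space M. X \<omega> \<in> A}) \<partial>lborel)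
        = (\<integral>\<^sup>+x. ennreal (1/pa) * (ennreal (f x) * indicator A x) \<partial>lborel)"
      using pa0 f0 by (intro nn_integral_cong) (auto simp: indicator_def pa_def ennreal_mult[symmetric])
    also have "\<dots> = ennreal (1/pa) * ennreal pa" by (simp add: nn_integral_cmult emA)
    also have "\<dots> = 1" using pa0 by (simp add: ennreal_mult[symmetric])
    finally show "(\<integral>\<^sup>+x. ennreal (indicator A x * f x / measure M {\<omega> \<in> space M. X \<omega> \<in> A}) \<partial>lborel) = 1" .
    have "(\<integral>\<^sup>+x. ennreal (x\<^sup>2 * (indicator A x * f x / measure M {\<omega> \<in> space M. X \<omega> \<in> A})) \<partial>lborel)
        \<le> (\<integral>\<^sup>+x. ennreal (1/pa) * (ennreal (f x) * ennreal (x\<^sup>2)) \<partial>lborel)"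
      using pa0 f0 by (intro nn_integral_mono) (auto simp: indicator_def pa_def ennreal_mult[symmetric] mult_ac)
    also have "\<dots> = ennreal (1/pa) * (\<integral>\<^sup>+x. ennreal (f x) * ennreal (x\<^sup>2) \<partial>lborel)"
      by (rule nn_integral_cmult) measurable
    also have "(\<integral>\<^sup>+x. ennreal (f x) * ennreal (x\<^sup>2) \<partial>lborel) = (\<integral>\<^sup>+\<omega>. ennreal ((X \<omega>)\<^sup>2) \<partial>M)"
      by (rule distributed_nn_integral[OF D]) measurable
    also have "ennreal (1/pa) * (\<integral>\<^sup>+\<omega>. ennreal ((X \<omega>)\<^sup>2) \<partial>M) < \<infinity>"
      using integrableD(2)[OF I2] by (simp add: ennreal_mult_less_top less_top)
    finally show "(\<integral>\<^sup>+x. ennreal (x\<^sup>2 * (indicator A x * f x / measure M {\<omega> \<in> space M. X \<omega> \<in> A})) \<partial>lborel) < \<infinity>" .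
  qed
qed

theorem proposition9:
  fixes M :: "'a measure" and X :: "'a \<Rightarrow> real" and f :: "real \<Rightarrow> real" and ustar :: real
  assumes "prob_space M"
    and "distributed M lborel X (\<lambda>x. ennreal (f x))"
    and "\<And>x. 0 \<le> f x"
    and "integrable M (\<lambda>\<omega>. (X \<omega>)\<^sup>2)"
  shows "(log_concave_density (upper_trunc_density M X f ustar) \<longrightarrow>
            (\<forall>u \<ge> ustar. 0 < measure M {\<omega> \<in> space M. u < X \<omega>} \<longrightarrow>
               SD_dens (upper_trunc_density M X f u) \<le> GMD_dens (upper_trunc_density M X f u)))
       \<and> (log_concave_density (lower_trunc_density M X f ustar) \<longrightarrow>
            (\<forall>u \<le> ustar. 0 < measure M {\<omega> \<in> space M. X \<omega> \<le> u} \<longrightarrow>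
               SD_dens (lower_trunc_density M X f u) \<le> GMD_dens (lower_trunc_density M X f u)))"
proof (intro conjI impI allI)
  fix u assume lcs: "log_concave_density (upper_trunc_density M X f ustar)" and u: "ustar \<le> u"
    and pu: "0 < measure M {\<omega> \<in> space M. u < X \<omega>}"
  have ue: "\<And>v. upper_trunc_density M X f v = (\<lambda>x. indicator {v<..} x * f x / measure M {\<omega> \<in> space M. X \<omega> \<in> {v<..}})"
    by (simp add: fun_eq_iff upper_trunc_density_def)
  have h0: "\<And>x. 0 \<le> upper_trunc_density M X f ustar x"
    using assms(3) by (simp add: upper_trunc_density_def)
  have "lcd (upper_trunc_density M X f u)"
    unfolding ue
  proof (rule trunc_lcd[OF assms(1-4)])
    show "{u<..} \<subseteq> {ustar<..}" using u by auto
    show "lc (indicator {u<..})" using lc_ind_greaterThan[of u] by (simp add: fun_eq_iff)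
    show "0 < measure M {\<omega> \<in> space M. X \<omega> \<in> {u<..}}" using pu by simp
    show "lc (\<lambda>x. indicator {ustar<..} x * f x / measure M {\<omega> \<in> space M. X \<omega> \<in> {ustar<..}})"
      using lcd_lc[OF h0 lcs] unfolding ue .
  qed simp_all
  then show "SD_dens (upper_trunc_density M X f u) \<le> GMD_dens (upper_trunc_density M X f u)"
    by (rule lcd.core)
next
  fix u assume lcs: "log_concave_density (lower_trunc_density M X f ustar)" and u: "u \<le> ustar"
    and pu: "0 < measure M {\<omega> \<in> space M. X \<omega> \<le> u}"
  have ue: "\<And>v. lower_trunc_density M X f v = (\<lambda>x. indicator {..v} x * f x / measure M {\<omega> \<in> space M. X \<omega> \<in> {..v}})"
    by (simp add: fun_eq_iff lower_trunc_density_def)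
  have h0: "\<And>x. 0 \<le> lower_trunc_density M X f ustar x"
    using assms(3) by (simp add: lower_trunc_density_def)
  have "lcd (lower_trunc_density M X f u)"
    unfolding ue
  proof (rule trunc_lcd[OF assms(1-4)])
    show "{..u} \<subseteq> {..ustar}" using u by auto
    show "lc (indicator {..u})" using lc_ind_atMost[of u] by (simp add: fun_eq_iff)
    show "0 < measure M {\<omega> \<in> space M. X \<omega> \<in> {..u}}" using pu by simp
    show "lc (\<lambda>x. indicator {..ustar} x * f x / measure M {\<omega> \<in> space M. X \<omega> \<in> {..ustar}})"
      using lcd_lc[OF h0 lcs] unfolding ue .
  qed simp_all
  then show "SD_dens (lower_trunc_density M X f u) \<le> GMD_dens (lower_trunc_density M X f u)"
    by (rule lcd.core)
qed


end
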